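(* In the setting of the context, let $J\in\mathbb{N}$ and $h:\mathbb{R}\times\{0,1\}\times\mathbb{R}^k\to\mathbb{R}^J$ be Borel measurable with $\mathbb{E}[\|h(Y(a),a,Z)\|_1]<\infty$ for each $a\in\{0,1\}$. Let $\eta_{ni}=h(Y_{ni},A_{ni},Z_i)$ and $\overline\eta_n=\frac1n\sum_{i=1}^n\eta_{ni}$. Then \[ \overline\eta_n\to\mathbb{E}[\pi(\mathbb{S}(Z))h(Y(1),1,Z)+(1-\pi(\mathbb{S}(Z)))h(Y(0),0,Z)]\quad\text{in probability.} \]
   Context: Population: $W=(Y(0),Y(1),Z')'\in\mathbb{R}^{2+k}$ with law $Q_0$ in a family $\mathbf{Q}$ of distributions each having a density w.r.t. a product of $\sigma$-finite measures and $\mathbb{E}_Q[Y(a)^2]<\infty$; $\mathbb{E}$ is under $Q_0$. Known measurable $\mathbb{S}:\mathbb{R}^k\to\{1,\dots,\mathcal{S}\}$ and $\pi(s)\in(0,1)$. $W_i=(Y_i(0),Y_i(1),Z_i)$ i.i.d. $Q_0$; treatments $\mathbf{A}_n=(A_{n1},\dots,A_{nn})\in\{0,1\}^n$; $S_i=\mathbb{S}(Z_i)$, $\mathbf{S}_n=(S_1,\dots,S_n)$; $Y_{ni}=Y_i(1)A_{ni}+Y_i(0)(1-A_{ni})$; $(W_1,\dots,W_n)$ and $\mathbf{A}_n$ conditionally independent given $\mathbf{S}_n$; $\Pr(\mathbf{A}_n=\mathbf{a}\mid\mathbf{S}_n=\mathbf{s})$ known and not depending on $Q_0$; $N_n(1,s)/N_n(s)\to\pi(s)$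 in probability for each $s$ ($N_n(s)=\sum_i\mathbb{I}\{S_i=s\}$, $N_n(a,s)=\sum_i\mathbb{I}\{A_{ni}=a,S_i=s\}$). *)

theory Defs
  imports "HOL-Probability.Probability"
begin

definition conv_in_prob :: "'a measure \<Rightarrow> (nat \<Rightarrow> 'a \<Rightarrow> 'b::metric_space) \<Rightarrow> 'b \<Rightarrow> bool" where
  "conv_in_prob M X c \<longleftrightarrow>
     (\<forall>e>0. (\<lambda>n. measure M {\<omega> \<in> space M. dist (X n \<omega>) c > e}) \<longlonglongrightarrow> 0)"

definition N_s :: "(nat \<Rightarrow> 'a \<Rightarrow> 'z) \<Rightarrow> ('z \<Rightarrow> nat) \<Rightarrow> nat \<Rightarrow> nat \<Rightarrow> 'a \<Rightarrow> nat" where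
  "N_s Z Sf n s \<omega> = card {i. i < n \<and> Sf (Z i \<omega>) = s}"

definition N_as :: "(nat \<Rightarrow> nat \<Rightarrow> 'a \<Rightarrow> nat) \<Rightarrow> (nat \<Rightarrow> 'a \<Rightarrow> 'z) \<Rightarrow> ('z \<Rightarrow> nat) \<Rightarrow> nat \<Rightarrow> nat \<Rightarrow> nat \<Rightarrow> 'a \<Rightarrow> nat" where
  "N_as A Z Sf n a s \<omega> = card {i. i < n \<and> A n i \<omega> = a \<and> Sf (Z i \<omega>) = s}"

text \<open>Conditional independence of (W_1,...,W_n) and A_n given the (discrete, finitely
  valued) stratum vector S_n: for every value s of S_n,
  P(W\<in>B, A=a, S=s) P(S=s) = P(W\<in>B, S=s) P(A=a, S=s).\<close>
definition cond_indep_strata ::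
  "'a measure \<Rightarrow> nat \<Rightarrow> (nat \<Rightarrow> 'a \<Rightarrow> 'w::topological_space) \<Rightarrow> (nat \<Rightarrow> 'a \<Rightarrow> nat)
     \<Rightarrow> (nat \<Rightarrow> 'a \<Rightarrow> nat) \<Rightarrow> bool" where
  "cond_indep_strata M n W An S \<longleftrightarrow>
     (\<forall>B \<in> sets (PiM {..<n} (\<lambda>_. borel)). \<forall>a s.
        measure M {\<omega> \<in> space M. restrict (\<lambda>i. W i \<omega>) {..<n} \<in> B
                      \<and> restrict (\<lambda>i. An i \<omega>) {..<n} = a \<and> restrict (\<lambda>i. S i \<omega>) {..<n} = s}
        * measure M {\<omega> \<in> space M. restrict (\<lambda>i. S i \<omega>) {..<n} = s}
      = measure M {\<omega> \<in> space M. restrict (\<lambda>i. W i \<omega>) {..<n} \<in> B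
                      \<and> restrict (\<lambda>i. S i \<omega>) {..<n} = s}
        * measure M {\<omega> \<in> space M. restrict (\<lambda>i. An i \<omega>) {..<n} = a
                      \<and> restrict (\<lambda>i. S i \<omega>) {..<n} = s})"

end

theory Submission
  imports Defs
begin
lemma conv_in_prob_sum_bound:
  fixes X :: "nat \<Rightarrow> 'a \<Rightarrow> 'b::metric_space" and U :: "'k \<Rightarrow> nat \<Rightarrow> 'a \<Rightarrow> 'c::metric_space"
  assumes M: "prob_space M" and K: "finite K"
   and conv: "\<And>k. k\<in>K \<Longrightarrow> conv_in_prob M (U k) (c k)"
   and meas: "\<And>k n. k\<in>K \<Longrightarrow> (\<lambda>\<omega>. dist (U k n \<omega>) (c k)) \<in> borel_measurable M"
   and C: "C \<ge> 0"
   and bound: "\<And>n \<omega>. n > 0 \<Longrightarrow> \<omega> \<in> space M \<Longrightarrow> dist (X n \<omega>) x \<le> C * (\<Sum>k\<in>K. dist (U k n \<omega>) (c k))"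
  shows "conv_in_prob M X x"
  unfolding conv_in_prob_def
proof (intro allI impI)
  fix e :: real assume e: "e > 0"
  interpret prob_space M by fact
  define d where "d = e / (C * card K + 1)"
  have qpos: "C * card K + 1 > 0" using C by (simp add: add_nonneg_pos)
  have d: "d > 0" unfolding d_def using e qpos by simp
  have sub: "{\<omega> \<in> space M. dist (X n \<omega>) x > e} \<subseteq> (\<Union>k\<in>K. {\<omega> \<in> space M. dist (U k n \<omega>) (c k) > d})" if n0: "n > 0" for n
  proof
    fix \<omega> assume w: "\<omega> \<in> {\<omega> \<in> space M. dist (X n \<omega>) x > e}"
    show "\<omega> \<in> (\<Union>k\<in>K. {\<omega> \<in> space M. dist (U k n \<omega>) (c k) > d})"
    proof (rule ccontr)
      assume "\<not> ?thesis"
      with w have all: "\<And>k. k \<in> K \<Longrightarrow> dist (U k n \<omega>) (c k) \<le> d" by auto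
      have "(\<Sum>k\<in>K. dist (U k n \<omega>) (c k)) \<le> (\<Sum>k\<in>K. d)" by (rule sum_mono) (use all in auto)
      hence "C * (\<Sum>k\<in>K. dist (U k n \<omega>) (c k)) \<le> C * (card K * d)" using C by (simp add: mult_left_mono)
      also have "\<dots> = e * (C * card K) / (C * card K + 1)" unfolding d_def by simp
      also have "\<dots> < e" using e qpos C by (simp add: field_simps)
      finally show False using bound[OF n0, of \<omega>] w by auto
    qed
  qed
  have le: "measure M {\<omega> \<in> space M. dist (X n \<omega>) x > e} \<le> (\<Sum>k\<in>K. measure M {\<omega> \<in> space M. dist (U k n \<omega>) (c k) > d})" if n0: "n > 0" for n
  proof -
    have "measure M {\<omega> \<in> space M. dist (X n \<omega>) x > e} \<le> measure M (\<Union>k\<in>K. {\<omega> \<in> space M. dist (U k n \<omega>) (c k) > d})"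
      by (rule finite_measure_mono[OF sub[OF n0]]) (use K meas in auto)
    also have "\<dots> \<le> (\<Sum>k\<in>K. measure M {\<omega> \<in> space M. dist (U k n \<omega>) (c k) > d})"
      by (rule finite_measure_subadditive_finite) (use K meas in auto)
    finally show ?thesis .
  qed
  have lim: "(\<lambda>n. \<Sum>k\<in>K. measure M {\<omega> \<in> space M. dist (U k n \<omega>) (c k) > d}) \<longlonglongrightarrow> 0"
    using conv d unfolding conv_in_prob_def by (auto intro!: tendsto_null_sum)
  show "(\<lambda>n. measure M {\<omega> \<in> space M. dist (X n \<omega>) x > e}) \<longlonglongrightarrow> 0"
    by (rule tendsto_sandwich[OF _ _ tendsto_const lim]) (use le in \<open>auto simp: eventually_sequentially intro!: exI[of _ 1]\<close>)
qed

lemma markov_sq: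
  fixes Y :: "'a \<Rightarrow> real"
  assumes M: "prob_space M" and Ym: "Y \<in> borel_measurable M" and Yi: "integrable M (\<lambda>\<omega>. (Y \<omega>)\<^sup>2)" and e: "e > 0"
  shows "measure M {\<omega> \<in> space M. \<bar>Y \<omega>\<bar> > e} \<le> (\<integral>\<omega>. (Y \<omega>)\<^sup>2 \<partial>M) / e\<^sup>2"
proof -
  interpret prob_space M by fact
  have "measure M {\<omega> \<in> space M. \<bar>Y \<omega>\<bar> > e} \<le> measure M {\<omega> \<in> space M. (Y \<omega>)\<^sup>2 \<ge> e\<^sup>2}"
  proof (rule finite_measure_mono)
    show "{\<omega> \<in> space M. \<bar>Y \<omega>\<bar> > e} \<subseteq> {\<omega> \<in> space M. (Y \<omega>)\<^sup>2 \<ge> e\<^sup>2}"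
      using e by (auto simp: abs_le_square_iff[symmetric])
    show "{\<omega> \<in> space M. (Y \<omega>)\<^sup>2 \<ge> e\<^sup>2} \<in> sets M" using Ym by measurable
  qed
  also have "\<dots> \<le> (\<integral>\<omega>. (Y \<omega>)\<^sup>2 \<partial>M) / e\<^sup>2"
    by (rule integral_Markov_inequality_measure[where A="space M"]) (use Yi e in auto)
  finally show ?thesis .
qed

lemma conv_in_prob_cheb:
  fixes X :: "nat \<Rightarrow> nat \<Rightarrow> 'a \<Rightarrow> real"
  assumes M: "prob_space M"
    and meas: "\<And>n i. X n i \<in> borel_measurable M"
    and bnd: "\<And>n i \<omega>. \<omega> \<in> space M \<Longrightarrow> \<bar>X n i \<omega>\<bar> \<le> B"
    and orth: "\<And>n i j. i < n \<Longrightarrow> j < n \<Longrightarrow> i \<noteq> j \<Longrightarrow> (\<integral>\<omega>. X n i \<omega> * X n j \<omega> \<partial>M) = 0"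
  shows "conv_in_prob M (\<lambda>n \<omega>. (1 / real n) * (\<Sum>i<n. X n i \<omega>)) 0"
  unfolding conv_in_prob_def
proof (intro allI impI)
  fix e :: real assume e: "e > 0"
  interpret prob_space M by fact
  have intXX: "integrable M (\<lambda>\<omega>. X n i \<omega> * X n j \<omega>)" for n i j
  proof (rule integrable_const_bound[where B="B*B"])
    show "AE x in M. norm (X n i x * X n j x) \<le> B * B"
      using bnd by (auto simp: abs_mult intro!: mult_mono' AE_I2 order.trans[OF abs_ge_zero bnd])
  qed (use meas in measurable)
  have ES: "(\<integral>\<omega>. (\<Sum>i<n. X n i \<omega>)\<^sup>2 \<partial>M) \<le> real n * B\<^sup>2" for n
  proof -
    have "(\<integral>\<omega>. (\<Sum>i<n. X n i \<omega>)\<^sup>2 \<partial>M) = (\<integral>\<omega>. (\<Sum>i<n. \<Sum>j<n. X n i \<omega> * X n j \<omega>) \<partial>M)"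
      by (simp add: power2_eq_square sum_product)
    also have "\<dots> = (\<Sum>i<n. \<Sum>j<n. (\<integral>\<omega>. X n i \<omega> * X n j \<omega> \<partial>M))"
      using intXX by simp
    also have "\<dots> = (\<Sum>i<n. (\<integral>\<omega>. X n i \<omega> * X n i \<omega> \<partial>M))"
    proof (rule sum.cong[OF refl])
      fix i assume i: "i \<in> {..<n}"
      have "(\<Sum>j<n. (\<integral>\<omega>. X n i \<omega> * X n j \<omega> \<partial>M)) = (\<Sum>j\<in>{i}. (\<integral>\<omega>. X n i \<omega> * X n j \<omega> \<partial>M))"
        by (rule sum.mono_neutral_right) (use i orth in auto)
      then show "(\<Sum>j<n. (\<integral>\<omega>. X n i \<omega> * X n j \<omega> \<partial>M)) = (\<integral>\<omega>. X n i \<omega> * X n i \<omega> \<partial>M)" by simp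
    qed
    also have "\<dots> \<le> (\<Sum>i<n. B\<^sup>2)"
    proof (rule sum_mono)
      fix i
      have "(\<integral>\<omega>. X n i \<omega> * X n i \<omega> \<partial>M) \<le> (\<integral>\<omega>. B\<^sup>2 \<partial>M)"
      proof (rule integral_mono)
        show "X n i \<omega> * X n i \<omega> \<le> B\<^sup>2" if "\<omega> \<in> space M" for \<omega>
          using bnd[OF that, of n i] by (simp add: power2_eq_square[symmetric] abs_le_square_iff[symmetric])
      qed (use intXX in auto)
      then show "(\<integral>\<omega>. X n i \<omega> * X n i \<omega> \<partial>M) \<le> B\<^sup>2" by (simp add: prob_space)
    qed
    finally show ?thesis by simp
  qed
  have le: "measure M {\<omega> \<in> space M. dist ((1 / real n) * (\<Sum>i<n. X n i \<omega>)) 0 > e} \<le> B\<^sup>2 / e\<^sup>2 * (1 / real n)" for n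
  proof (cases "n = 0")
    case True then show ?thesis using e by simp
  next
    case False
    have "measure M {\<omega> \<in> space M. dist ((1 / real n) * (\<Sum>i<n. X n i \<omega>)) 0 > e}
        = measure M {\<omega> \<in> space M. \<bar>(1 / real n) * (\<Sum>i<n. X n i \<omega>)\<bar> > e}" by simp
    also have "\<dots> \<le> (\<integral>\<omega>. ((1 / real n) * (\<Sum>i<n. X n i \<omega>))\<^sup>2 \<partial>M) / e\<^sup>2"
    proof (rule markov_sq[OF M _ _ e])
      show "(\<lambda>\<omega>. 1 / real n * (\<Sum>i<n. X n i \<omega>)) \<in> borel_measurable M" using meas by measurable
      show "integrable M (\<lambda>\<omega>. (1 / real n * (\<Sum>i<n. X n i \<omega>))\<^sup>2)"
        using intXX by (simp add: power2_eq_square sum_product algebra_simps)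
    qed
    also have "(\<integral>\<omega>. ((1 / real n) * (\<Sum>i<n. X n i \<omega>))\<^sup>2 \<partial>M) = (1 / real n)\<^sup>2 * (\<integral>\<omega>. (\<Sum>i<n. X n i \<omega>)\<^sup>2 \<partial>M)"
      by (simp add: power_mult_distrib del: times_divide_eq_left divide_inverse_commute)
    also have "\<dots> \<le> (1 / real n)\<^sup>2 * (real n * B\<^sup>2)"
      by (rule mult_left_mono[OF ES]) simp
    also have "(1 / real n)\<^sup>2 * (real n * B\<^sup>2) = B\<^sup>2 * (1 / real n)" using False by (simp add: power2_eq_square)
    finally show ?thesis using e by (simp add: divide_right_mono mult.commute)
  qed
  have lim: "(\<lambda>n. B\<^sup>2 / e\<^sup>2 * (1 / real n)) \<longlonglongrightarrow> 0"
    by (intro tendsto_mult_right_zero lim_const_over_n)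
  show "(\<lambda>n. measure M {\<omega> \<in> space M. dist ((1 / real n) * (\<Sum>i<n. X n i \<omega>)) 0 > e}) \<longlonglongrightarrow> 0"
    by (rule tendsto_sandwich[OF _ _ tendsto_const lim]) (use le in auto)
qed

lemma ci_integral:
  fixes W :: "nat \<Rightarrow> 'a \<Rightarrow> 'w::topological_space" and \<phi> :: "(nat \<Rightarrow> 'w) \<Rightarrow> real"
  assumes M: "prob_space M"
   and Wm: "\<And>i. W i \<in> borel_measurable M"
   and E: "E \<in> sets M" and F: "F \<in> sets M"
   and ci: "\<And>B. B \<in> sets (PiM {..<n} (\<lambda>_. borel)) \<Longrightarrow>
        measure M ({\<omega>\<in>space M. restrict (\<lambda>i. W i \<omega>) {..<n} \<in> B} \<inter> E) * measure M F
      = measure M ({\<omega>\<in>space M. restrict (\<lambda>i. W i \<omega>) {..<n} \<in> B} \<inter> F) * measure M E"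
   and phim: "\<phi> \<in> borel_measurable (PiM {..<n} (\<lambda>_. borel))"
  shows "(\<integral>\<omega>. indicator E \<omega> * \<phi> (restrict (\<lambda>i. W i \<omega>) {..<n}) \<partial>M) * measure M F
       = (\<integral>\<omega>. indicator F \<omega> * \<phi> (restrict (\<lambda>i. W i \<omega>) {..<n}) \<partial>M) * measure M E"
proof -
  interpret prob_space M by fact
  define P where "P = PiM {..<n} (\<lambda>_. borel :: 'w measure)"
  define Wr where "Wr = (\<lambda>\<omega>. restrict (\<lambda>i. W i \<omega>) {..<n})"
  have Wrm[measurable]: "Wr \<in> measurable M P"
    unfolding Wr_def P_def by (rule measurable_restrict) (use Wm in auto)
  have [measurable]: "E \<in> sets M" "F \<in> sets M" by fact+
  define D where "D = (\<lambda>G (c::real). distr (density M (\<lambda>\<omega>. ennreal (indicator G \<omega> * c))) P Wr)"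
  have emD: "emeasure (D G c) B = ennreal (c * measure M ({\<omega>\<in>space M. Wr \<omega> \<in> B} \<inter> G))"
    if G: "G \<in> sets M" and c: "c \<ge> 0" and B: "B \<in> sets P" for G c B
  proof -
    have [measurable]: "G \<in> sets M" "B \<in> sets P" by fact+
    have "emeasure (D G c) B = emeasure (density M (\<lambda>\<omega>. indicator G \<omega> * c)) (Wr -` B \<inter> space M)"
      unfolding D_def by (subst emeasure_distr) auto
    also have "\<dots> = (\<integral>\<^sup>+ \<omega>. ennreal (indicator G \<omega> * c) * indicator (Wr -` B \<inter> space M) \<omega> \<partial>M)"
      by (subst emeasure_density) auto
    also have "\<dots> = (\<integral>\<^sup>+ \<omega>. ennreal c * indicator ({\<omega>\<in>space M. Wr \<omega> \<in> B} \<inter> G) \<omega> \<partial>M)"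
      by (intro nn_integral_cong) (auto simp: indicator_def)
    also have "\<dots> = ennreal c * emeasure M ({\<omega>\<in>space M. Wr \<omega> \<in> B} \<inter> G)"
      by (rule nn_integral_cmult_indicator) measurable
    also have "\<dots> = ennreal (c * measure M ({\<omega>\<in>space M. Wr \<omega> \<in> B} \<inter> G))"
      using c by (simp add: emeasure_eq_measure ennreal_mult)
    finally show ?thesis .
  qed
  have eq: "D E (measure M F) = D F (measure M E)"
  proof (rule measure_eqI)
    show "sets (D E (measure M F)) = sets (D F (measure M E))" unfolding D_def by simp
    fix B assume "B \<in> sets (D E (measure M F))"
    then have B: "B \<in> sets P" unfolding D_def by simp
    show "emeasure (D E (measure M F)) B = emeasure (D F (measure M E)) B"
      using ci[of B] B unfolding emD[OF E measure_nonneg B] emD[OF F measure_nonneg B]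
      by (simp add: P_def Wr_def mult.commute)
  qed
  have intD: "integral\<^sup>L (D G c) \<phi> = (\<integral>\<omega>. indicator G \<omega> * \<phi> (Wr \<omega>) \<partial>M) * c"
    if G: "G \<in> sets M" and c: "c \<ge> 0" for G c
  proof -
    have [measurable]: "G \<in> sets M" by fact
    have [measurable]: "\<phi> \<in> borel_measurable P" using phim by (simp add: P_def)
    have "integral\<^sup>L (D G c) \<phi> = integral\<^sup>L (density M (\<lambda>\<omega>. indicator G \<omega> * c)) (\<lambda>\<omega>. \<phi> (Wr \<omega>))"
      unfolding D_def by (subst integral_distr) auto
    also have "\<dots> = (\<integral>\<omega>. (indicator G \<omega> * c) *\<^sub>R \<phi> (Wr \<omega>) \<partial>M)"
      by (subst integral_density) (use c in auto)
    also have "\<dots> = (\<integral>\<omega>. indicator G \<omega> * \<phi> (Wr \<omega>) \<partial>M) * c"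
      by (simp add: mult_ac)
    finally show ?thesis .
  qed
  show ?thesis
    using intD[OF E, of "measure M F"] intD[OF F, of "measure M E"] eq
    by (simp add: Wr_def)
qed

lemma integral_ident:
  fixes W :: "nat \<Rightarrow> 'a \<Rightarrow> 'w::topological_space" and v :: "'w \<Rightarrow> 'b::{banach, second_countable_topology}"
  assumes Wm: "\<And>i. W i \<in> borel_measurable M"
    and ident: "\<And>i. distr M borel (W i) = distr M borel (W 0)"
    and vm: "v \<in> borel_measurable borel"
  shows "(\<integral>\<omega>. v (W i \<omega>) \<partial>M) = (\<integral>\<omega>. v (W 0 \<omega>) \<partial>M)"
proof -
  have "(\<integral>\<omega>. v (W i \<omega>) \<partial>M) = integral\<^sup>L (distr M borel (W i)) v"
    by (rule integral_distr[symmetric]) (use Wm vm in auto)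
  also have "\<dots> = integral\<^sup>L (distr M borel (W 0)) v" by (simp add: ident[of i])
  also have "\<dots> = (\<integral>\<omega>. v (W 0 \<omega>) \<partial>M)"
    by (rule integral_distr) (use Wm vm in auto)
  finally show ?thesis .
qed

lemma integrable_ident:
  fixes W :: "nat \<Rightarrow> 'a \<Rightarrow> 'w::topological_space" and v :: "'w \<Rightarrow> 'b::{banach, second_countable_topology}"
  assumes Wm: "\<And>i. W i \<in> borel_measurable M"
    and ident: "\<And>i. distr M borel (W i) = distr M borel (W 0)"
    and vm: "v \<in> borel_measurable borel"
    and int0: "integrable M (\<lambda>\<omega>. v (W 0 \<omega>))"
  shows "integrable M (\<lambda>\<omega>. v (W i \<omega>))"
proof -
  have "integrable (distr M borel (W 0)) v"
    using int0 by (subst integrable_distr_eq) (use Wm vm in auto)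
  then have "integrable (distr M borel (W i)) v" by (simp add: ident[of i])
  then show ?thesis
    by (subst (asm) integrable_distr_eq) (use Wm vm in auto)
qed

lemma indep_prod_zero:
  fixes W :: "nat \<Rightarrow> 'a \<Rightarrow> 'w::topological_space" and v :: "'w \<Rightarrow> real"
  assumes M: "prob_space M"
    and Wm: "\<And>i. W i \<in> borel_measurable M"
    and indep: "prob_space.indep_vars M (\<lambda>_. borel) W UNIV"
    and ident: "\<And>i. distr M borel (W i) = distr M borel (W 0)"
    and Swm: "Sw \<in> borel \<rightarrow>\<^sub>M count_space UNIV"
    and vm: "v \<in> borel_measurable borel"
    and vb: "\<And>w. \<bar>v w\<bar> \<le> C"
    and v0: "(\<integral>\<omega>. v (W 0 \<omega>) \<partial>M) = 0"
    and vsupp: "\<And>w. v w \<noteq> 0 \<Longrightarrow> Sw w = s"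
    and ij: "i < n" "j < n" "i \<noteq> j"
  shows "(\<integral>\<omega>. indicator {\<omega>\<in>space M. \<forall>k<n. Sw (W k \<omega>) = \<sigma> k} \<omega> * (v (W i \<omega>) * v (W j \<omega>)) \<partial>M) = 0"
proof -
  interpret prob_space M by fact
  have [measurable]: "Sw \<in> borel \<rightarrow>\<^sub>M count_space UNIV" "v \<in> borel_measurable borel" by fact+
  have [measurable]: "W i \<in> borel_measurable M" for i by (rule Wm)
  define g where "g = (\<lambda>k w. (if Sw w = \<sigma> k then 1 else 0) * (if k = i then v w else 1) * (if k = j then v w else (1::real)))"
  have gm[measurable]: "g k \<in> borel_measurable borel" for k unfolding g_def by measurable
  have gb: "\<bar>g k w\<bar> \<le> max 1 C * max 1 C" for k w
  proof -
    have c1: "\<bar>(if k = i then v w else 1)\<bar> \<le> max 1 C" using vb[of w] by auto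
    have c2: "\<bar>(if k = j then v w else 1)\<bar> \<le> max 1 C" using vb[of w] by auto
    have "\<bar>g k w\<bar> \<le> \<bar>(if k = i then v w else 1)\<bar> * \<bar>(if k = j then v w else 1)\<bar>"
      unfolding g_def by (auto simp: abs_mult)
    also have "\<dots> \<le> max 1 C * max 1 C" by (rule mult_mono[OF c1 c2]) auto
    finally show ?thesis .
  qed
  have gint: "integrable M (\<lambda>\<omega>. g k (W k \<omega>))" for k
    by (rule integrable_const_bound[where B="max 1 C * max 1 C"]) (use gb in auto)
  have pw: "indicator {\<omega>\<in>space M. \<forall>k<n. Sw (W k \<omega>) = \<sigma> k} \<omega> * (v (W i \<omega>) * v (W j \<omega>)) = (\<Prod>k<n. g k (W k \<omega>))"
    if \<omega>: "\<omega> \<in> space M" for \<omega>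
  proof (cases "\<forall>k<n. Sw (W k \<omega>) = \<sigma> k")
    case True
    have "(\<Prod>k<n. g k (W k \<omega>)) = (\<Prod>k<n. (if k = i then v (W k \<omega>) else 1) * (if k = j then v (W k \<omega>) else 1))"
      by (rule prod.cong) (use True in \<open>auto simp: g_def\<close>)
    also have "\<dots> = v (W i \<omega>) * v (W j \<omega>)"
      by (simp add: prod.distrib ij)
    finally show ?thesis using True \<omega> by simp
  next
    case False
    then obtain k where k: "k < n" "Sw (W k \<omega>) \<noteq> \<sigma> k" by auto
    have "(\<Prod>k<n. g k (W k \<omega>)) = 0" by (rule prod_zero) (use k in \<open>auto simp: g_def intro!: bexI[of _ k]\<close>)
    then show ?thesis using False by simp
  qed
  have "(\<integral>\<omega>. indicator {\<omega>\<in>space M. \<forall>k<n. Sw (W k \<omega>) = \<sigma> k} \<omega> * (v (W i \<omega>) * v (W j \<omega>)) \<partial>M)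
      = (\<integral>\<omega>. (\<Prod>k<n. g k (W k \<omega>)) \<partial>M)"
    by (rule Bochner_Integration.integral_cong[OF refl]) (simp add: pw)
  also have "\<dots> = (\<Prod>k<n. \<integral>\<omega>. g k (W k \<omega>) \<partial>M)"
  proof (rule indep_vars_lebesgue_integral)
    show "indep_vars (\<lambda>_. borel) (\<lambda>k \<omega>. g k (W k \<omega>)) {..<n}"
    proof -
      have "indep_vars (\<lambda>_. borel) W {..<n}" by (rule indep_vars_subset[OF indep]) auto
      from indep_vars_compose2[OF this, of g "\<lambda>_. borel"] show ?thesis by simp
    qed
  qed (use gint in auto)
  also have "\<dots> = 0"
  proof (rule prod_zero)
    have "(\<integral>\<omega>. g i (W i \<omega>) \<partial>M) = 0"
    proof (cases "\<sigma> i = s")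
      case True
      have "(\<integral>\<omega>. g i (W i \<omega>) \<partial>M) = (\<integral>\<omega>. v (W i \<omega>) \<partial>M)"
        by (rule Bochner_Integration.integral_cong[OF refl]) (use ij True vsupp in \<open>auto simp: g_def\<close>)
      also have "\<dots> = (\<integral>\<omega>. v (W 0 \<omega>) \<partial>M)" by (rule integral_ident[of W M v, OF Wm ident vm])
      finally show ?thesis using v0 by simp
    next
      case False
      have "(\<integral>\<omega>. g i (W i \<omega>) \<partial>M) = (\<integral>\<omega>. 0 \<partial>M)"
        by (rule Bochner_Integration.integral_cong[OF refl]) (use ij False vsupp in \<open>auto simp: g_def, metis\<close>)
      then show ?thesis by simp
    qed
    then show "\<exists>k\<in>{..<n}. (\<integral>\<omega>. g k (W k \<omega>) \<partial>M) = 0" using ij by auto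
  qed simp
  finally show ?thesis .
qed

lemma orth_A:
  fixes W :: "nat \<Rightarrow> 'a \<Rightarrow> 'w::topological_space" and v :: "'w \<Rightarrow> real"
    and A :: "nat \<Rightarrow> nat \<Rightarrow> 'a \<Rightarrow> nat"
  assumes M: "prob_space M"
    and Wm: "\<And>i. W i \<in> borel_measurable M"
    and indep: "prob_space.indep_vars M (\<lambda>_. borel) W UNIV"
    and ident: "\<And>i. distr M borel (W i) = distr M borel (W 0)"
    and Swm: "Sw \<in> borel \<rightarrow>\<^sub>M count_space UNIV"
    and Sw_range: "\<And>w. Sw w \<in> {1..Sc}"
    and A_meas: "\<And>n i. A n i \<in> M \<rightarrow>\<^sub>M count_space UNIV"
    and A_bin: "\<And>n i \<omega>. A n i \<omega> \<in> {0, 1}"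
    and ci: "cond_indep_strata M n W (A n) (\<lambda>i \<omega>. Sw (W i \<omega>))"
    and vm: "v \<in> borel_measurable borel"
    and vb: "\<And>w. \<bar>v w\<bar> \<le> C"
    and v0: "(\<integral>\<omega>. v (W 0 \<omega>) \<partial>M) = 0"
    and vsupp: "\<And>w. v w \<noteq> 0 \<Longrightarrow> Sw w = s"
    and ij: "i < n" "j < n" "i \<noteq> j"
  shows "(\<integral>\<omega>. (if A n i \<omega> = a then v (W i \<omega>) else 0) * (if A n j \<omega> = a then v (W j \<omega>) else 0) \<partial>M) = 0"
proof -
  interpret prob_space M by fact
  have [measurable]: "Sw \<in> borel \<rightarrow>\<^sub>M count_space UNIV" "v \<in> borel_measurable borel" by fact+
  have [measurable]: "W i \<in> borel_measurable M" for i by (rule Wm)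
  have [measurable]: "A n i \<in> M \<rightarrow>\<^sub>M count_space UNIV" for n i by (rule A_meas)
  define P where "P = PiM {..<n} (\<lambda>_. borel :: 'w measure)"
  define Wr where "Wr = (\<lambda>\<omega>. restrict (\<lambda>i. W i \<omega>) {..<n})"
  define Ar where "Ar = (\<lambda>\<omega>. restrict (\<lambda>i. A n i \<omega>) {..<n})"
  define Sr where "Sr = (\<lambda>\<omega>. restrict (\<lambda>i. Sw (W i \<omega>)) {..<n})"
  have Wrm[measurable]: "Wr \<in> measurable M P"
    unfolding Wr_def P_def by (rule measurable_restrict) (use Wm in auto)
  define AS where "AS = PiE {..<n} (\<lambda>_. {0,1::nat}) \<times> PiE {..<n} (\<lambda>_. {1..Sc})"
  have ASfin: "finite AS" unfolding AS_def by (auto intro!: finite_PiE)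
  define E where "E = (\<lambda>\<alpha> \<sigma>. {\<omega>\<in>space M. Ar \<omega> = \<alpha> \<and> Sr \<omega> = \<sigma>})"
  define F where "F = (\<lambda>\<sigma>. {\<omega>\<in>space M. Sr \<omega> = \<sigma>})"
  define \<phi> where "\<phi> = (\<lambda>w::nat \<Rightarrow> 'w. v (w i) * v (w j))"
  have phim[measurable]: "\<phi> \<in> borel_measurable P"
  proof -
    have [measurable]: "i \<in> {..<n}" "j \<in> {..<n}" using ij by auto
    show ?thesis unfolding \<phi>_def P_def by measurable
  qed
  have phib: "\<bar>\<phi> w\<bar> \<le> C * C" for w
    unfolding \<phi>_def abs_mult by (rule mult_mono) (use vb[of "w i"] vb[of "w j"] in auto)
  have Eeq: "E \<alpha> \<sigma> = {\<omega>\<in>space M. \<forall>k\<in>{..<n}. A n k \<omega> = \<alpha> k \<and> Sw (W k \<omega>) = \<sigma> k}"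
    if "(\<alpha>, \<sigma>) \<in> AS" for \<alpha> \<sigma>
    using that unfolding E_def AS_def Ar_def Sr_def
    by (auto simp: PiE_def extensional_def restrict_def fun_eq_iff)
  have Feq: "F \<sigma> = {\<omega>\<in>space M. \<forall>k<n. Sw (W k \<omega>) = \<sigma> k}"
    if "\<sigma> \<in> PiE {..<n} (\<lambda>_. {1..Sc})" for \<sigma>
    using that unfolding F_def Sr_def
    by (auto simp: PiE_def extensional_def restrict_def fun_eq_iff)
  have Em: "E \<alpha> \<sigma> \<in> sets M" if "(\<alpha>, \<sigma>) \<in> AS" for \<alpha> \<sigma>
    unfolding Eeq[OF that] by measurable
  have Fm: "F \<sigma> \<in> sets M" if "\<sigma> \<in> PiE {..<n} (\<lambda>_. {1..Sc})" for \<sigma>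
    unfolding Feq[OF that] by measurable
  have pw: "(if A n i \<omega> = a then v (W i \<omega>) else 0) * (if A n j \<omega> = a then v (W j \<omega>) else 0)
      = (\<Sum>(\<alpha>,\<sigma>)\<in>AS. (if \<alpha> i = a \<and> \<alpha> j = a then 1 else 0) * (indicator (E \<alpha> \<sigma>) \<omega> * \<phi> (Wr \<omega>)))"
    if \<omega>: "\<omega> \<in> space M" for \<omega>
  proof -
    have mem: "(Ar \<omega>, Sr \<omega>) \<in> AS" unfolding AS_def Ar_def Sr_def using A_bin Sw_range by auto
    have "(\<Sum>(\<alpha>,\<sigma>)\<in>AS. (if \<alpha> i = a \<and> \<alpha> j = a then 1 else 0) * (indicator (E \<alpha> \<sigma>) \<omega> * \<phi> (Wr \<omega>)))
        = (\<Sum>p\<in>AS. if p = (Ar \<omega>, Sr \<omega>) then (if fst p i = a \<and> fst p j = a then 1 else 0) * \<phi> (Wr \<omega>) else 0)"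
      by (rule sum.cong[OF refl]) (auto simp: E_def \<omega> indicator_def)
    also have "\<dots> = (if Ar \<omega> i = a \<and> Ar \<omega> j = a then 1 else 0) * \<phi> (Wr \<omega>)"
      using mem ASfin by (simp add: sum.delta')
    finally show ?thesis using ij by (simp add: Ar_def Wr_def \<phi>_def)
  qed
  have intE: "integrable M (\<lambda>\<omega>. indicator (E \<alpha> \<sigma>) \<omega> * \<phi> (Wr \<omega>))" if "(\<alpha>, \<sigma>) \<in> AS" for \<alpha> \<sigma>
  proof (rule integrable_const_bound[where B="C*C"])
    show "AE x in M. norm (indicator (E \<alpha> \<sigma>) x * \<phi> (Wr x)) \<le> C * C"
      using phib order.trans[OF abs_ge_zero phib] by (auto simp: indicator_def)
    show "(\<lambda>\<omega>. indicator (E \<alpha> \<sigma>) \<omega> * \<phi> (Wr \<omega>)) \<in> borel_measurable M"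
      using Em[OF that] by measurable
  qed
  have zero: "(\<integral>\<omega>. indicator (E \<alpha> \<sigma>) \<omega> * \<phi> (Wr \<omega>) \<partial>M) = 0" if p: "(\<alpha>, \<sigma>) \<in> AS" for \<alpha> \<sigma>
  proof -
    have \<sigma>: "\<sigma> \<in> PiE {..<n} (\<lambda>_. {1..Sc})" using p unfolding AS_def by auto
    have ciB: "measure M ({\<omega>\<in>space M. restrict (\<lambda>i. W i \<omega>) {..<n} \<in> B} \<inter> E \<alpha> \<sigma>) * measure M (F \<sigma>)
      = measure M ({\<omega>\<in>space M. restrict (\<lambda>i. W i \<omega>) {..<n} \<in> B} \<inter> F \<sigma>) * measure M (E \<alpha> \<sigma>)"
      if B: "B \<in> sets (PiM {..<n} (\<lambda>_. borel))" for B
    proof -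
      have "measure M {\<omega> \<in> space M. restrict (\<lambda>i. W i \<omega>) {..<n} \<in> B
                      \<and> restrict (\<lambda>i. A n i \<omega>) {..<n} = \<alpha> \<and> restrict (\<lambda>i. Sw (W i \<omega>)) {..<n} = \<sigma>}
        * measure M {\<omega> \<in> space M. restrict (\<lambda>i. Sw (W i \<omega>)) {..<n} = \<sigma>}
      = measure M {\<omega> \<in> space M. restrict (\<lambda>i. W i \<omega>) {..<n} \<in> B
                      \<and> restrict (\<lambda>i. Sw (W i \<omega>)) {..<n} = \<sigma>}
        * measure M {\<omega> \<in> space M. restrict (\<lambda>i. A n i \<omega>) {..<n} = \<alpha>
                      \<and> restrict (\<lambda>i. Sw (W i \<omega>)) {..<n} = \<sigma>}"
        using ci B unfolding cond_indep_strata_def by blast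
      moreover have "{\<omega> \<in> space M. restrict (\<lambda>i. W i \<omega>) {..<n} \<in> B
                      \<and> restrict (\<lambda>i. A n i \<omega>) {..<n} = \<alpha> \<and> restrict (\<lambda>i. Sw (W i \<omega>)) {..<n} = \<sigma>}
          = {\<omega>\<in>space M. restrict (\<lambda>i. W i \<omega>) {..<n} \<in> B} \<inter> E \<alpha> \<sigma>"
        unfolding E_def Ar_def Sr_def by auto
      moreover have "{\<omega> \<in> space M. restrict (\<lambda>i. W i \<omega>) {..<n} \<in> B
                      \<and> restrict (\<lambda>i. Sw (W i \<omega>)) {..<n} = \<sigma>}
          = {\<omega>\<in>space M. restrict (\<lambda>i. W i \<omega>) {..<n} \<in> B} \<inter> F \<sigma>"
        unfolding F_def Sr_def by auto
      moreover have "{\<omega> \<in> space M. restrict (\<lambda>i. Sw (W i \<omega>)) {..<n} = \<sigma>} = F \<sigma>"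
        unfolding F_def Sr_def by auto
      moreover have "{\<omega> \<in> space M. restrict (\<lambda>i. A n i \<omega>) {..<n} = \<alpha>
                      \<and> restrict (\<lambda>i. Sw (W i \<omega>)) {..<n} = \<sigma>} = E \<alpha> \<sigma>"
        unfolding E_def Ar_def Sr_def by auto
      ultimately show ?thesis by (simp add: mult.commute)
    qed
    have CI: "(\<integral>\<omega>. indicator (E \<alpha> \<sigma>) \<omega> * \<phi> (Wr \<omega>) \<partial>M) * measure M (F \<sigma>)
       = (\<integral>\<omega>. indicator (F \<sigma>) \<omega> * \<phi> (Wr \<omega>) \<partial>M) * measure M (E \<alpha> \<sigma>)"
      unfolding Wr_def
      by (rule ci_integral[OF M Wm Em[OF p] Fm[OF \<sigma>] ciB]) (use phim P_def in auto)
    have "(\<integral>\<omega>. indicator (F \<sigma>) \<omega> * \<phi> (Wr \<omega>) \<partial>M)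
        = (\<integral>\<omega>. indicator {\<omega>\<in>space M. \<forall>k<n. Sw (W k \<omega>) = \<sigma> k} \<omega> * (v (W i \<omega>) * v (W j \<omega>)) \<partial>M)"
      unfolding Feq[OF \<sigma>] by (simp add: \<phi>_def Wr_def ij)
    also have "\<dots> = 0"
      by (rule indep_prod_zero[OF M Wm indep ident Swm vm vb v0 vsupp ij])
    finally have F0: "(\<integral>\<omega>. indicator (F \<sigma>) \<omega> * \<phi> (Wr \<omega>) \<partial>M) = 0" .
    show ?thesis
    proof (cases "measure M (F \<sigma>) = 0")
      case False
      then show ?thesis using CI F0 by simp
    next
      case True
      have "AE \<omega> in M. \<omega> \<notin> F \<sigma>"
        using True Fm[OF \<sigma>] by (intro AE_not_in) (auto simp: null_sets_def emeasure_eq_measure)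
      then have "AE \<omega> in M. indicator (E \<alpha> \<sigma>) \<omega> * \<phi> (Wr \<omega>) = 0"
        by eventually_elim (auto simp: E_def F_def indicator_def)
      then have "(\<integral>\<omega>. indicator (E \<alpha> \<sigma>) \<omega> * \<phi> (Wr \<omega>) \<partial>M) = (\<integral>\<omega>. 0 \<partial>M)"
        by (intro integral_cong_AE) (use Em[OF p] in measurable)
      then show ?thesis by simp
    qed
  qed
  have "(\<integral>\<omega>. (if A n i \<omega> = a then v (W i \<omega>) else 0) * (if A n j \<omega> = a then v (W j \<omega>) else 0) \<partial>M)
      = (\<integral>\<omega>. (\<Sum>(\<alpha>,\<sigma>)\<in>AS. (if \<alpha> i = a \<and> \<alpha> j = a then 1 else 0) * (indicator (E \<alpha> \<sigma>) \<omega> * \<phi> (Wr \<omega>))) \<partial>M)"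
    by (rule Bochner_Integration.integral_cong[OF refl]) (simp add: pw)
  also have "\<dots> = (\<Sum>p\<in>AS. (\<integral>\<omega>. (if fst p i = a \<and> fst p j = a then 1 else 0) * (indicator (E (fst p) (snd p)) \<omega> * \<phi> (Wr \<omega>)) \<partial>M))"
    unfolding case_prod_beta
    by (rule Bochner_Integration.integral_sum) (use intE in \<open>auto intro!: integrable_mult_right\<close>)
  also have "\<dots> = 0"
    by (rule sum.neutral) (use zero in auto)
  finally show ?thesis .
qed

lemma tail_small:
  fixes f :: "'a \<Rightarrow> real"
  assumes fi: "integrable M f" and eta: "\<eta> > 0"
  shows "\<exists>m::nat. (\<integral>\<omega>. (if \<bar>f \<omega>\<bar> > real m then \<bar>f \<omega>\<bar> else 0) \<partial>M) < \<eta>"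
proof -
  have fm[measurable]: "f \<in> borel_measurable M" using fi by auto
  have "(\<lambda>m::nat. \<integral>\<omega>. (if \<bar>f \<omega>\<bar> > real m then \<bar>f \<omega>\<bar> else 0) \<partial>M) \<longlonglongrightarrow> (\<integral>\<omega>. 0 \<partial>M)"
  proof (rule integral_dominated_convergence[where w="\<lambda>\<omega>. \<bar>f \<omega>\<bar>"])
    show "integrable M (\<lambda>\<omega>. \<bar>f \<omega>\<bar>)" using fi by auto
    show "AE x in M. (\<lambda>m::nat. if \<bar>f x\<bar> > real m then \<bar>f x\<bar> else 0) \<longlonglongrightarrow> 0"
    proof (rule AE_I2)
      fix x
      obtain N :: nat where "\<bar>f x\<bar> < real N" using reals_Archimedean2 by blast
      then have "eventually (\<lambda>m. (if \<bar>f x\<bar> > real m then \<bar>f x\<bar> else 0) = 0) sequentially"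
        unfolding eventually_sequentially
        by (intro exI[of _ N]) auto
      then show "(\<lambda>m::nat. if \<bar>f x\<bar> > real m then \<bar>f x\<bar> else 0) \<longlonglongrightarrow> 0"
        by (rule tendsto_eventually)
    qed
    show "AE x in M. norm (if \<bar>f x\<bar> > real m then \<bar>f x\<bar> else 0) \<le> \<bar>f x\<bar>" for m
      by auto
  qed measurable
  then have "(\<lambda>m::nat. \<integral>\<omega>. (if \<bar>f \<omega>\<bar> > real m then \<bar>f \<omega>\<bar> else 0) \<partial>M) \<longlonglongrightarrow> 0" by simp
  from LIMSEQ_D[OF this eta] obtain no where "\<forall>n\<ge>no. norm ((\<integral>\<omega>. (if \<bar>f \<omega>\<bar> > real n then \<bar>f \<omega>\<bar> else 0) \<partial>M) - 0) < \<eta>"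
    by blast
  then show ?thesis by auto
qed

lemma core:
  fixes W :: "nat \<Rightarrow> 'a \<Rightarrow> 'w::topological_space" and u :: "'w \<Rightarrow> real"
    and A :: "nat \<Rightarrow> nat \<Rightarrow> 'a \<Rightarrow> nat"
  assumes M: "prob_space M"
    and Wm: "\<And>i. W i \<in> borel_measurable M"
    and indep: "prob_space.indep_vars M (\<lambda>_. borel) W UNIV"
    and ident: "\<And>i. distr M borel (W i) = distr M borel (W 0)"
    and Swm: "Sw \<in> borel \<rightarrow>\<^sub>M count_space UNIV"
    and Sw_range: "\<And>w. Sw w \<in> {1..Sc}"
    and A_meas: "\<And>n i. A n i \<in> M \<rightarrow>\<^sub>M count_space UNIV"
    and A_bin: "\<And>n i \<omega>. A n i \<omega> \<in> {0, 1}"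
    and ci: "\<And>n. cond_indep_strata M n W (A n) (\<lambda>i \<omega>. Sw (W i \<omega>))"
    and um: "u \<in> borel_measurable borel"
    and uint: "integrable M (\<lambda>\<omega>. u (W 0 \<omega>))"
    and u0: "(\<integral>\<omega>. u (W 0 \<omega>) \<partial>M) = 0"
    and usupp: "\<And>w. u w \<noteq> 0 \<Longrightarrow> Sw w = s"
  shows "conv_in_prob M (\<lambda>n \<omega>. (1 / real n) * (\<Sum>i<n. if A n i \<omega> = a then u (W i \<omega>) else 0)) 0"
  unfolding conv_in_prob_def
proof (intro allI impI)
  fix e :: real assume e: "e > 0"
  interpret prob_space M by fact
  have [measurable]: "Sw \<in> borel \<rightarrow>\<^sub>M count_space UNIV" "u \<in> borel_measurable borel" by fact+
  have [measurable]: "W i \<in> borel_measurable M" for i by (rule Wm)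
  have [measurable]: "A n i \<in> M \<rightarrow>\<^sub>M count_space UNIV" for n i by (rule A_meas)
  show "(\<lambda>n. prob {\<omega> \<in> space M. e < dist (1 / real n * (\<Sum>i<n. if A n i \<omega> = a then u (W i \<omega>) else 0)) 0}) \<longlonglongrightarrow> 0"
  proof (rule LIMSEQ_I)
    fix \<delta> :: real assume \<delta>: "\<delta> > 0"
    obtain m :: nat where tail: "(\<integral>\<omega>. (if \<bar>u (W 0 \<omega>)\<bar> > real m then \<bar>u (W 0 \<omega>)\<bar> else 0) \<partial>M) < \<delta> * e / 8"
      using tail_small[OF uint, of "\<delta> * e / 8"] \<delta> e by auto
    define K where "K = real m"
    define \<tau> where "\<tau> = (\<integral>\<omega>. (if \<bar>u (W 0 \<omega>)\<bar> > K then \<bar>u (W 0 \<omega>)\<bar> else 0) \<partial>M)"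
    have tau: "\<tau> < \<delta> * e / 8" using tail unfolding \<tau>_def K_def .
    define t where "t = (\<lambda>w. if \<bar>u w\<bar> \<le> K then u w else 0)"
    define cK where "cK = (\<integral>\<omega>. t (W 0 \<omega>) \<partial>M)"
    define p where "p = prob {\<omega>\<in>space M. Sw (W 0 \<omega>) = s}"
    define uK where "uK = (\<lambda>w. t w - (cK / p) * (if Sw w = s then 1 else 0))"
    define r where "r = (\<lambda>w. u w - uK w)"
    have tm[measurable]: "t \<in> borel_measurable borel" unfolding t_def by measurable
    have uKm[measurable]: "uK \<in> borel_measurable borel" unfolding uK_def by measurable
    have rm[measurable]: "r \<in> borel_measurable borel" unfolding r_def by measurable
    have tb: "\<bar>t w\<bar> \<le> K" for w unfolding t_def K_def by auto
    have uKb: "\<bar>uK w\<bar> \<le> K + \<bar>cK / p\<bar>" for w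
      using tb[of w] unfolding uK_def by (auto simp: abs_if split: if_splits)
    have tsupp: "t w \<noteq> 0 \<Longrightarrow> Sw w = s" for w unfolding t_def using usupp by (auto split: if_splits)
    have uKsupp: "uK w \<noteq> 0 \<Longrightarrow> Sw w = s" for w unfolding uK_def using tsupp by (auto split: if_splits)
    have tint: "integrable M (\<lambda>\<omega>. t (W i \<omega>))" for i
      by (rule integrable_const_bound[where B=K]) (use tb in auto)
    have ind_int: "integrable M (\<lambda>\<omega>. (if Sw (W i \<omega>) = s then 1 else 0::real))" for i
      by (rule integrable_const_bound[where B=1]) auto
    have uKint: "integrable M (\<lambda>\<omega>. uK (W i \<omega>))" for i
      by (rule integrable_const_bound[where B="K + \<bar>cK / p\<bar>"]) (use uKb in auto)
    have uint_i: "integrable M (\<lambda>\<omega>. u (W i \<omega>))" for i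
      by (rule integrable_ident[of W M u, OF Wm ident um uint])
    have rint: "integrable M (\<lambda>\<omega>. r (W i \<omega>))" for i
      unfolding r_def using uint_i uKint by auto
    have intind: "(\<integral>\<omega>. (if Sw (W 0 \<omega>) = s then 1 else 0::real) \<partial>M) = p"
    proof -
      have "(\<integral>\<omega>. (if Sw (W 0 \<omega>) = s then 1 else 0::real) \<partial>M) = (\<integral>\<omega>. indicator {\<omega>\<in>space M. Sw (W 0 \<omega>) = s} \<omega> \<partial>M)"
        by (rule Bochner_Integration.integral_cong[OF refl]) (auto simp: indicator_def)
      also have "\<dots> = p" unfolding p_def by (simp add: Int_absorb2 subset_iff)
      finally show ?thesis .
    qed
    have p0: "cK = 0" if "p = 0"
    proof -
      have "{\<omega>\<in>space M. Sw (W 0 \<omega>) = s} \<in> null_sets M"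
        using that unfolding p_def by (auto simp: null_sets_def emeasure_eq_measure)
      then have "AE \<omega> in M. \<omega> \<notin> {\<omega>\<in>space M. Sw (W 0 \<omega>) = s}" by (rule AE_not_in)
      with AE_space have "AE \<omega> in M. t (W 0 \<omega>) = 0"
        by eventually_elim (use tsupp in auto)
      then have "cK = (\<integral>\<omega>. 0 \<partial>M)" unfolding cK_def by (intro integral_cong_AE) auto
      then show ?thesis by simp
    qed
    have uK0: "(\<integral>\<omega>. uK (W 0 \<omega>) \<partial>M) = 0"
    proof -
      have "(\<integral>\<omega>. uK (W 0 \<omega>) \<partial>M) = cK - (cK / p) * p"
        unfolding uK_def using tint[of 0] ind_int[of 0] intind by (simp add: cK_def)
      then show ?thesis using p0 by (cases "p = 0") auto
    qed
    have umt: "\<bar>u w - t w\<bar> = (if \<bar>u w\<bar> > K then \<bar>u w\<bar> else 0)" for w unfolding t_def by auto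
    have cKb: "\<bar>cK\<bar> \<le> \<tau>"
    proof -
      have "cK = - (\<integral>\<omega>. u (W 0 \<omega>) - t (W 0 \<omega>) \<partial>M)"
        unfolding cK_def using uint tint[of 0] u0 by simp
      then have "\<bar>cK\<bar> = \<bar>\<integral>\<omega>. u (W 0 \<omega>) - t (W 0 \<omega>) \<partial>M\<bar>" by simp
      also have "\<dots> \<le> (\<integral>\<omega>. \<bar>u (W 0 \<omega>) - t (W 0 \<omega>)\<bar> \<partial>M)" by (rule integral_abs_bound)
      also have "\<dots> = \<tau>" unfolding \<tau>_def umt ..
      finally show ?thesis .
    qed
    have rb: "(\<integral>\<omega>. \<bar>r (W 0 \<omega>)\<bar> \<partial>M) \<le> 2 * \<tau>"
    proof -
      have "(\<integral>\<omega>. \<bar>r (W 0 \<omega>)\<bar> \<partial>M) \<le> (\<integral>\<omega>. \<bar>u (W 0 \<omega>) - t (W 0 \<omega>)\<bar> + \<bar>cK / p\<bar> * (if Sw (W 0 \<omega>) = s then 1 else 0) \<partial>M)"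
      proof (rule integral_mono)
        show "integrable M (\<lambda>\<omega>. \<bar>r (W 0 \<omega>)\<bar>)" using rint by auto
        show "integrable M (\<lambda>\<omega>. \<bar>u (W 0 \<omega>) - t (W 0 \<omega>)\<bar> + \<bar>cK / p\<bar> * (if Sw (W 0 \<omega>) = s then 1 else 0))"
          using uint tint[of 0] ind_int[of 0] by auto
        show "\<bar>r (W 0 \<omega>)\<bar> \<le> \<bar>u (W 0 \<omega>) - t (W 0 \<omega>)\<bar> + \<bar>cK / p\<bar> * (if Sw (W 0 \<omega>) = s then 1 else 0)" for \<omega>
          unfolding r_def uK_def by (auto simp: abs_if)
      qed
      also have "\<dots> = (\<integral>\<omega>. \<bar>u (W 0 \<omega>) - t (W 0 \<omega>)\<bar> \<partial>M) + (\<integral>\<omega>. \<bar>cK / p\<bar> * (if Sw (W 0 \<omega>) = s then 1 else 0) \<partial>M)"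
        by (rule Bochner_Integration.integral_add) (use uint tint[of 0] ind_int[of 0] in auto)
      also have "\<dots> = \<tau> + \<bar>cK / p\<bar> * p"
        by (simp only: integral_mult_right_zero intind \<tau>_def umt)
      also have "\<bar>cK / p\<bar> * p \<le> \<tau>"
      proof (cases "p = 0")
        case True then show ?thesis using cKb by (simp add: order.trans[OF abs_ge_zero])
      next
        case False
        have "p \<ge> 0" unfolding p_def by simp
        then have "\<bar>cK / p\<bar> * p = \<bar>cK\<bar>" using False by (simp add: abs_div)
        then show ?thesis using cKb by simp
      qed
      finally show ?thesis by simp
    qed
    have chebY: "conv_in_prob M (\<lambda>n \<omega>. (1 / real n) * (\<Sum>i<n. if A n i \<omega> = a then uK (W i \<omega>) else 0)) 0"
    proof (rule conv_in_prob_cheb[OF M, where B="K + \<bar>cK / p\<bar>"])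
      show "(\<lambda>\<omega>. if A n i \<omega> = a then uK (W i \<omega>) else 0) \<in> borel_measurable M" for n i by measurable
      show "\<bar>if A n i \<omega> = a then uK (W i \<omega>) else 0\<bar> \<le> K + \<bar>cK / p\<bar>" for n i \<omega>
        using uKb[of "W i \<omega>"] order.trans[OF abs_ge_zero uKb] by auto
      show "(\<integral>\<omega>. (if A n i \<omega> = a then uK (W i \<omega>) else 0) * (if A n j \<omega> = a then uK (W j \<omega>) else 0) \<partial>M) = 0"
        if "i < n" "j < n" "i \<noteq> j" for n i j
        by (rule orth_A[of M W Sw Sc A n uK, OF M Wm indep ident Swm Sw_range A_meas A_bin ci uKm uKb uK0 uKsupp that])
    qed
    have e2: "e / 2 > 0" using e by simp
    from chebY e2 have "(\<lambda>n. prob {\<omega> \<in> space M. e / 2 < dist ((1 / real n) * (\<Sum>i<n. if A n i \<omega> = a then uK (W i \<omega>) else 0)) 0}) \<longlonglongrightarrow> 0"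
      unfolding conv_in_prob_def by blast
    from LIMSEQ_D[OF this, of "\<delta> / 2"] \<delta> obtain N where
      N: "\<And>n. n \<ge> N \<Longrightarrow> prob {\<omega> \<in> space M. e / 2 < dist ((1 / real n) * (\<Sum>i<n. if A n i \<omega> = a then uK (W i \<omega>) else 0)) 0} < \<delta> / 2"
      by auto
    have Rb: "prob {\<omega> \<in> space M. e / 2 < \<bar>(1 / real n) * (\<Sum>i<n. if A n i \<omega> = a then r (W i \<omega>) else 0)\<bar>} \<le> 4 * \<tau> / e" for n
    proof -
      define R where "R = (\<lambda>\<omega>. (1 / real n) * (\<Sum>i<n. if A n i \<omega> = a then r (W i \<omega>) else 0))"
      have Rm[measurable]: "R \<in> borel_measurable M" unfolding R_def by measurable
      have absb: "\<bar>R \<omega>\<bar> \<le> (1 / real n) * (\<Sum>i<n. \<bar>r (W i \<omega>)\<bar>)" for \<omega>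
      proof -
        have "\<bar>\<Sum>i<n. if A n i \<omega> = a then r (W i \<omega>) else 0\<bar> \<le> (\<Sum>i<n. \<bar>if A n i \<omega> = a then r (W i \<omega>) else 0\<bar>)"
          by (rule sum_abs)
        also have "\<dots> \<le> (\<Sum>i<n. \<bar>r (W i \<omega>)\<bar>)" by (rule sum_mono) auto
        finally show ?thesis unfolding R_def by (simp add: abs_mult divide_right_mono)
      qed
      have absint: "integrable M (\<lambda>\<omega>. (1 / real n) * (\<Sum>i<n. \<bar>r (W i \<omega>)\<bar>))" using rint by auto
      have Rint: "integrable M (\<lambda>\<omega>. \<bar>R \<omega>\<bar>)"
        by (rule Bochner_Integration.integrable_bound[OF absint]) (use absb in auto)
      have "(\<integral>\<omega>. \<bar>R \<omega>\<bar> \<partial>M) \<le> (\<integral>\<omega>. (1 / real n) * (\<Sum>i<n. \<bar>r (W i \<omega>)\<bar>) \<partial>M)"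
        by (rule integral_mono[OF Rint absint]) (use absb in auto)
      also have "\<dots> = (1 / real n) * (\<Sum>i<n. (\<integral>\<omega>. \<bar>r (W i \<omega>)\<bar> \<partial>M))"
        using rint by simp
      also have "\<dots> = (1 / real n) * (real n * (\<integral>\<omega>. \<bar>r (W 0 \<omega>)\<bar> \<partial>M))"
      proof -
        have "(\<integral>\<omega>. \<bar>r (W i \<omega>)\<bar> \<partial>M) = (\<integral>\<omega>. \<bar>r (W 0 \<omega>)\<bar> \<partial>M)" for i
          by (rule integral_ident[of W M "\<lambda>w. \<bar>r w\<bar>", OF Wm ident]) measurable
        then have "(\<Sum>i<n. (\<integral>\<omega>. \<bar>r (W i \<omega>)\<bar> \<partial>M)) = (\<Sum>i<n. (\<integral>\<omega>. \<bar>r (W 0 \<omega>)\<bar> \<partial>M))"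
          by (intro sum.cong) auto
        then show ?thesis by simp
      qed
      also have "\<dots> \<le> 2 * \<tau>"
      proof -
        have "0 \<le> (\<integral>\<omega>. \<bar>r (W 0 \<omega>)\<bar> \<partial>M)" by (rule Bochner_Integration.integral_nonneg) auto
        then have "0 \<le> \<tau>" using rb by linarith
        then show ?thesis using rb by (cases "n = 0") auto
      qed
      finally have ERb: "(\<integral>\<omega>. \<bar>R \<omega>\<bar> \<partial>M) \<le> 2 * \<tau>" .
      have "prob {\<omega> \<in> space M. e / 2 < \<bar>R \<omega>\<bar>} \<le> prob {\<omega> \<in> space M. \<bar>R \<omega>\<bar> \<ge> e / 2}"
        by (rule finite_measure_mono) auto
      also have "\<dots> \<le> (\<integral>\<omega>. \<bar>R \<omega>\<bar> \<partial>M) / (e / 2)"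
        by (rule integral_Markov_inequality_measure[where A="space M"]) (use Rint e in auto)
      also have "\<dots> \<le> (2 * \<tau>) / (e / 2)"
        by (rule divide_right_mono[OF ERb]) (use e in auto)
      also have "\<dots> = 4 * \<tau> / e" by simp
      finally show ?thesis unfolding R_def .
    qed
    have tau_e: "4 * \<tau> / e < \<delta> / 2" using tau e by (simp add: field_simps)
    show "\<exists>no. \<forall>n\<ge>no. norm (prob {\<omega> \<in> space M. e < dist (1 / real n * (\<Sum>i<n. if A n i \<omega> = a then u (W i \<omega>) else 0)) 0} - 0) < \<delta>"
    proof (intro exI allI impI)
      fix n assume n: "n \<ge> N"
      define Y where "Y = (\<lambda>\<omega>. (1 / real n) * (\<Sum>i<n. if A n i \<omega> = a then uK (W i \<omega>) else 0))"
      define R where "R = (\<lambda>\<omega>. (1 / real n) * (\<Sum>i<n. if A n i \<omega> = a then r (W i \<omega>) else 0))"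
      have split: "1 / real n * (\<Sum>i<n. if A n i \<omega> = a then u (W i \<omega>) else 0) = Y \<omega> + R \<omega>" for \<omega>
      proof -
        have "(\<Sum>i<n. if A n i \<omega> = a then u (W i \<omega>) else 0) = (\<Sum>i<n. (if A n i \<omega> = a then uK (W i \<omega>) else 0) + (if A n i \<omega> = a then r (W i \<omega>) else 0))"
          by (rule sum.cong) (auto simp: r_def)
        then show ?thesis unfolding Y_def R_def by (simp add: sum.distrib add_divide_distrib)
      qed
      have sub: "{\<omega> \<in> space M. e < dist (1 / real n * (\<Sum>i<n. if A n i \<omega> = a then u (W i \<omega>) else 0)) 0}
          \<subseteq> {\<omega> \<in> space M. e / 2 < dist (Y \<omega>) 0} \<union> {\<omega> \<in> space M. e / 2 < \<bar>R \<omega>\<bar>}"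
        unfolding split by auto
      have "prob {\<omega> \<in> space M. e < dist (1 / real n * (\<Sum>i<n. if A n i \<omega> = a then u (W i \<omega>) else 0)) 0}
          \<le> prob ({\<omega> \<in> space M. e / 2 < dist (Y \<omega>) 0} \<union> {\<omega> \<in> space M. e / 2 < \<bar>R \<omega>\<bar>})"
        by (rule finite_measure_mono[OF sub]) (unfold Y_def R_def, measurable)
      also have "\<dots> \<le> prob {\<omega> \<in> space M. e / 2 < dist (Y \<omega>) 0} + prob {\<omega> \<in> space M. e / 2 < \<bar>R \<omega>\<bar>}"
        by (rule measure_Un_le) (unfold Y_def R_def, measurable)
      also have "\<dots> < \<delta> / 2 + \<delta> / 2"
        using N[OF n] Rb[of n] tau_e unfolding Y_def R_def by linarith
      finally show "norm (prob {\<omega> \<in> space M. e < dist (1 / real n * (\<Sum>i<n. if A n i \<omega> = a then u (W i \<omega>) else 0)) 0} - 0) < \<delta>"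
        by simp
    qed
  qed
qed

lemma card_sum_real: "real (card {i. i < (n::nat) \<and> P i}) = (\<Sum>i<n. if P i then 1 else 0)"
proof -
  have "(\<Sum>i<n. if P i then 1 else 0::real) = (\<Sum>i\<in>{i\<in>{..<n}. P i}. 1)"
    by (rule sum.inter_filter[symmetric]) simp
  moreover have "(\<Sum>i\<in>{i\<in>{..<n}. P i}. 1::real) = real (card {i\<in>{..<n}. P i})" by simp
  moreover have "{i. i < n \<and> P i} = {i\<in>{..<n}. P i}" by auto
  ultimately show ?thesis by metis
qed

lemma freq_conv:
  fixes W :: "nat \<Rightarrow> 'a \<Rightarrow> 'w::topological_space"
  assumes M: "prob_space M"
    and Wm: "\<And>i. W i \<in> borel_measurable M"
    and indep: "prob_space.indep_vars M (\<lambda>_. borel) W UNIV"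
    and ident: "\<And>i. distr M borel (W i) = distr M borel (W 0)"
    and Swm: "Sw \<in> borel \<rightarrow>\<^sub>M count_space UNIV"
  shows "conv_in_prob M (\<lambda>n \<omega>. real (card {i. i < n \<and> Sw (W i \<omega>) = s}) / real n) (measure M {\<omega>\<in>space M. Sw (W 0 \<omega>) = s})"
proof -
  interpret prob_space M by fact
  have [measurable]: "Sw \<in> borel \<rightarrow>\<^sub>M count_space UNIV" by fact
  have [measurable]: "W i \<in> borel_measurable M" for i by (rule Wm)
  define p where "p = prob {\<omega>\<in>space M. Sw (W 0 \<omega>) = s}"
  define v where "v = (\<lambda>w. (if Sw w = s then 1 else 0) - p)"
  have vm[measurable]: "v \<in> borel_measurable borel" unfolding v_def by measurable
  have p01: "0 \<le> p" "p \<le> 1" unfolding p_def by auto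
  have vb: "\<bar>v w\<bar> \<le> 1" for w unfolding v_def using p01 by auto
  have vint: "integrable M (\<lambda>\<omega>. v (W i \<omega>))" for i
    by (rule integrable_const_bound[where B=1]) (use vb in auto)
  have v0: "(\<integral>\<omega>. v (W i \<omega>) \<partial>M) = 0" for i
  proof -
    have "(\<integral>\<omega>. v (W i \<omega>) \<partial>M) = (\<integral>\<omega>. v (W 0 \<omega>) \<partial>M)"
      by (rule integral_ident[of W M v, OF Wm ident vm])
    also have "\<dots> = (\<integral>\<omega>. indicator {\<omega>\<in>space M. Sw (W 0 \<omega>) = s} \<omega> - p \<partial>M)"
      by (rule Bochner_Integration.integral_cong[OF refl]) (auto simp: v_def indicator_def)
    also have "\<dots> = 0"
    proof -
      have S: "{\<omega>\<in>space M. Sw (W 0 \<omega>) = s} \<in> sets M" by measurable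
      show ?thesis
        by (subst Bochner_Integration.integral_diff) (use S in \<open>auto simp: p_def Int_absorb2 subset_iff prob_space less_top[symmetric] intro!: integrable_real_indicator\<close>)
    qed
    finally show ?thesis .
  qed
  have cheb: "conv_in_prob M (\<lambda>n \<omega>. (1 / real n) * (\<Sum>i<n. v (W i \<omega>))) 0"
  proof (rule conv_in_prob_cheb[OF M, where B=1])
    show "(\<lambda>\<omega>. v (W i \<omega>)) \<in> borel_measurable M" for i by measurable
    show "\<bar>v (W i \<omega>)\<bar> \<le> 1" for i \<omega> by (rule vb)
    show "(\<integral>\<omega>. v (W i \<omega>) * v (W j \<omega>) \<partial>M) = 0" if "i < n" "j < n" "i \<noteq> j" for n i j
    proof -
      have "(\<integral>\<omega>. v (W i \<omega>) * v (W j \<omega>) \<partial>M) = (\<integral>\<omega>. (\<Prod>k\<in>{i,j}. v (W k \<omega>)) \<partial>M)"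
        using that by simp
      also have "\<dots> = (\<Prod>k\<in>{i,j}. \<integral>\<omega>. v (W k \<omega>) \<partial>M)"
      proof (rule indep_vars_lebesgue_integral)
        have "indep_vars (\<lambda>_. borel) W {i,j}" by (rule indep_vars_subset[OF indep]) auto
        from indep_vars_compose2[OF this, of "\<lambda>_. v" "\<lambda>_. borel"]
        show "indep_vars (\<lambda>_. borel) (\<lambda>k \<omega>. v (W k \<omega>)) {i,j}" by simp
      qed (use vint in auto)
      also have "\<dots> = 0" using v0 that by simp
      finally show ?thesis .
    qed
  qed
  show ?thesis
  proof (rule conv_in_prob_sum_bound[OF M, where K="{()}" and U="\<lambda>_. \<lambda>n \<omega>. (1 / real n) * (\<Sum>i<n. v (W i \<omega>))" and c="\<lambda>_. 0" and C=1])
    show "(\<lambda>\<omega>. dist (1 / real n * (\<Sum>i<n. v (W i \<omega>))) 0) \<in> borel_measurable M" for n by measurable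
    show "dist (real (card {i. i < n \<and> Sw (W i \<omega>) = s}) / real n) (prob {\<omega> \<in> space M. Sw (W 0 \<omega>) = s})
          \<le> 1 * (\<Sum>k\<in>{()}. dist (1 / real n * (\<Sum>i<n. v (W i \<omega>))) 0)" if "n > 0" for n \<omega>
    proof -
      have "(\<Sum>i<n. v (W i \<omega>)) = (\<Sum>i<n. if Sw (W i \<omega>) = s then 1 else 0) - real n * p"
        unfolding v_def by (simp add: sum_subtractf)
      then have "1 / real n * (\<Sum>i<n. v (W i \<omega>)) = real (card {i. i < n \<and> Sw (W i \<omega>) = s}) / real n - p"
        using that by (simp add: card_sum_real field_simps)
      then show ?thesis by (simp add: dist_real_def p_def)
    qed
  qed (use cheb in auto)
qed

lemma prod_conv:
  fixes Na N :: "nat \<Rightarrow> 'a \<Rightarrow> nat"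
  assumes M: "prob_space M"
    and Nam: "\<And>n. (\<lambda>\<omega>. real (Na n \<omega>)) \<in> borel_measurable M"
    and Nm: "\<And>n. (\<lambda>\<omega>. real (N n \<omega>)) \<in> borel_measurable M"
    and le1: "\<And>n \<omega>. Na n \<omega> \<le> N n \<omega>" and le2: "\<And>n \<omega>. N n \<omega> \<le> n"
    and c1: "conv_in_prob M (\<lambda>n \<omega>. real (Na n \<omega>) / real (N n \<omega>)) \<pi>"
    and c2: "conv_in_prob M (\<lambda>n \<omega>. real (N n \<omega>) / real n) p"
    and pib: "\<bar>\<pi>\<bar> \<le> 1"
  shows "conv_in_prob M (\<lambda>n \<omega>. real (Na n \<omega>) / real n) (\<pi> * p)"
    and "conv_in_prob M (\<lambda>n \<omega>. real (N n \<omega> - Na n \<omega>) / real n) ((1 - \<pi>) * p)"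
proof -
  define U where "U = (\<lambda>k::nat. if k = 0 then (\<lambda>n \<omega>. real (Na n \<omega>) / real (N n \<omega>)) else (\<lambda>n \<omega>. real (N n \<omega>) / real n))"
  define c where "c = (\<lambda>k::nat. if k = 0 then \<pi> else p)"
  have Uc: "conv_in_prob M (U k) (c k)" if "k \<in> {0,1}" for k using that c1 c2 by (auto simp: U_def c_def)
  have Um: "(\<lambda>\<omega>. dist (U k n \<omega>) (c k)) \<in> borel_measurable M" if "k \<in> {0,1}" for k n
    using that Nam[of n] Nm[of n] unfolding U_def c_def by auto
  have key: "\<bar>real (Na n \<omega>) / real n - \<pi> * p\<bar> \<le> (\<Sum>k\<in>{0,1}. dist (U k n \<omega>) (c k))" if n: "n > 0" for n \<omega>
  proof -
    define x where "x = real (Na n \<omega>) / real (N n \<omega>)"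
    define y where "y = real (N n \<omega>) / real n"
    have xy: "real (Na n \<omega>) / real n = x * y"
    proof (cases "N n \<omega> = 0")
      case True then have "Na n \<omega> = 0" using le1[of n \<omega>] by simp
      then show ?thesis using True by (simp add: x_def y_def)
    next
      case False then show ?thesis by (simp add: x_def y_def)
    qed
    have y1: "\<bar>y\<bar> \<le> 1" unfolding y_def using le2[of n \<omega>] n by auto
    have "\<bar>x * y - \<pi> * p\<bar> = \<bar>(x - \<pi>) * y + \<pi> * (y - p)\<bar>" by (simp add: algebra_simps)
    also have "\<dots> \<le> \<bar>(x - \<pi>) * y\<bar> + \<bar>\<pi> * (y - p)\<bar>" by (rule abs_triangle_ineq)
    also have "\<dots> = \<bar>x - \<pi>\<bar> * \<bar>y\<bar> + \<bar>\<pi>\<bar> * \<bar>y - p\<bar>" by (simp only: abs_mult)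
    also have "\<dots> \<le> \<bar>x - \<pi>\<bar> * 1 + 1 * \<bar>y - p\<bar>"
      by (intro add_mono mult_left_mono mult_right_mono y1 pib) auto
    finally have "\<bar>x * y - \<pi> * p\<bar> \<le> \<bar>x - \<pi>\<bar> + \<bar>y - p\<bar>" by simp
    moreover have "(\<Sum>k\<in>{0,1}. dist (U k n \<omega>) (c k)) = \<bar>x - \<pi>\<bar> + \<bar>y - p\<bar>"
      by (simp add: U_def c_def dist_real_def x_def y_def)
    ultimately show ?thesis by (simp add: xy)
  qed
  show "conv_in_prob M (\<lambda>n \<omega>. real (Na n \<omega>) / real n) (\<pi> * p)"
  proof (rule conv_in_prob_sum_bound[OF M, where K="{0,1}" and U=U and c=c and C=1])
    show "dist (real (Na n \<omega>) / real n) (\<pi> * p) \<le> 1 * (\<Sum>k\<in>{0,1}. dist (U k n \<omega>) (c k))" if "n > 0" for n \<omega>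
      using key[OF that, of \<omega>] by (simp add: dist_real_def)
  qed (use Uc Um in auto)
  show "conv_in_prob M (\<lambda>n \<omega>. real (N n \<omega> - Na n \<omega>) / real n) ((1 - \<pi>) * p)"
  proof (rule conv_in_prob_sum_bound[OF M, where K="{0,1}" and U=U and c=c and C=2])
    show "dist (real (N n \<omega> - Na n \<omega>) / real n) ((1 - \<pi>) * p) \<le> 2 * (\<Sum>k\<in>{0,1}. dist (U k n \<omega>) (c k))" if n: "n > 0" for n \<omega>
    proof -
      have "real (N n \<omega> - Na n \<omega>) / real n - (1 - \<pi>) * p = (real (N n \<omega>) / real n - p) - (real (Na n \<omega>) / real n - \<pi> * p)"
      proof -
        have "real (N n \<omega> - Na n \<omega>) = real (N n \<omega>) - real (Na n \<omega>)" using le1[of n \<omega>] by (rule of_nat_diff)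
        then show ?thesis by (simp add: diff_divide_distrib algebra_simps)
      qed
      then have "\<bar>real (N n \<omega> - Na n \<omega>) / real n - (1 - \<pi>) * p\<bar> \<le> \<bar>real (N n \<omega>) / real n - p\<bar> + \<bar>real (Na n \<omega>) / real n - \<pi> * p\<bar>"
        by linarith
      also have "\<dots> \<le> dist (U 1 n \<omega>) (c 1) + (\<Sum>k\<in>{0,1}. dist (U k n \<omega>) (c k))"
        using key[OF n, of \<omega>] by (simp add: U_def c_def dist_real_def)
      also have "\<dots> \<le> 2 * (\<Sum>k\<in>{0,1}. dist (U k n \<omega>) (c k))"
        by simp
      finally show ?thesis by (simp add: dist_real_def)
    qed
  qed (use Uc Um in auto)
qed

theorem lemma10:
  fixes M :: "'a measure"
    and Y0 Y1 :: "nat \<Rightarrow> 'a \<Rightarrow> real"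
    and Z :: "nat \<Rightarrow> 'a \<Rightarrow> real ^ 'k"
    and A :: "nat \<Rightarrow> nat \<Rightarrow> 'a \<Rightarrow> nat"
    and Sf :: "real ^ 'k \<Rightarrow> nat"
    and Sc :: nat
    and \<pi> :: "nat \<Rightarrow> real"
    and h :: "real \<Rightarrow> nat \<Rightarrow> real ^ 'k \<Rightarrow> real ^ 'j"
  assumes M: "prob_space M"
    and W_meas: "\<And>i. (\<lambda>\<omega>. (Y0 i \<omega>, Y1 i \<omega>, Z i \<omega>)) \<in> borel_measurable M"
    and W_indep: "prob_space.indep_vars M (\<lambda>_. borel) (\<lambda>i \<omega>. (Y0 i \<omega>, Y1 i \<omega>, Z i \<omega>)) UNIV"
    and W_ident: "\<And>i. distr M borel (\<lambda>\<omega>. (Y0 i \<omega>, Y1 i \<omega>, Z i \<omega>))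
                        = distr M borel (\<lambda>\<omega>. (Y0 0 \<omega>, Y1 0 \<omega>, Z 0 \<omega>))"
    and Y0_sq: "integrable M (\<lambda>\<omega>. (Y0 0 \<omega>)\<^sup>2)"
    and Y1_sq: "integrable M (\<lambda>\<omega>. (Y1 0 \<omega>)\<^sup>2)"
    and Sf_meas: "Sf \<in> borel \<rightarrow>\<^sub>M count_space UNIV"
    and Sf_range: "\<And>z. Sf z \<in> {1..Sc}"
    and \<pi>_range: "\<And>s. s \<in> {1..Sc} \<Longrightarrow> 0 < \<pi> s \<and> \<pi> s < 1"
    and A_meas: "\<And>n i. A n i \<in> M \<rightarrow>\<^sub>M count_space UNIV"
    and A_bin: "\<And>n i \<omega>. A n i \<omega> \<in> {0, 1}"
    and cond_indep: "\<And>n. cond_indep_strata M n (\<lambda>i \<omega>. (Y0 i \<omega>, Y1 i \<omega>, Z i \<omega>))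
                             (A n) (\<lambda>i \<omega>. Sf (Z i \<omega>))"
    and balance: "\<And>s. s \<in> {1..Sc} \<Longrightarrow>
          conv_in_prob M (\<lambda>n \<omega>. real (N_as A Z Sf n 1 s \<omega>) / real (N_s Z Sf n s \<omega>)) (\<pi> s)"
    and h_meas: "\<And>a. a \<in> {0, 1} \<Longrightarrow> (\<lambda>(y, z). h y a z) \<in> borel_measurable borel"
    and h_int: "\<And>a. a \<in> {0, 1} \<Longrightarrow>
          integrable M (\<lambda>\<omega>. h (if a = 1 then Y1 0 \<omega> else Y0 0 \<omega>) a (Z 0 \<omega>))"
  shows "conv_in_prob M
           (\<lambda>n \<omega>. (1 / real n) *\<^sub>R
              (\<Sum>i<n. h (Y1 i \<omega> * real (A n i \<omega>) + Y0 i \<omega> * (1 - real (A n i \<omega>)))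
                         (A n i \<omega>) (Z i \<omega>)))
           (integral\<^sup>L M (\<lambda>\<omega>. \<pi> (Sf (Z 0 \<omega>)) *\<^sub>R h (Y1 0 \<omega>) 1 (Z 0 \<omega>)
                             + (1 - \<pi> (Sf (Z 0 \<omega>))) *\<^sub>R h (Y0 0 \<omega>) 0 (Z 0 \<omega>)))"
proof -
  interpret prob_space M by fact
  define W where "W = (\<lambda>i \<omega>. (Y0 i \<omega>, Y1 i \<omega>, Z i \<omega>))"
  define Sw where "Sw = (\<lambda>w::real \<times> real \<times> (real^'k). Sf (snd (snd w)))"
  define g where "g = (\<lambda>a (w::real \<times> real \<times> (real^'k)). h (if a = 1 then fst (snd w) else fst w) a (snd (snd w)))"
  define pia where "pia = (\<lambda>a s. if a = (1::nat) then \<pi> s else 1 - \<pi> s)"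
  define p where "p = (\<lambda>s. prob {\<omega>\<in>space M. Sw (W 0 \<omega>) = s})"
  define f where "f = (\<lambda>c a s w. if Sw w = s then g a w $ c else 0)"
  define m where "m = (\<lambda>c a s. \<integral>\<omega>. f c a s (W 0 \<omega>) \<partial>M)"
  define u where "u = (\<lambda>c a s w. f c a s w - (m c a s / p s) * (if Sw w = s then 1 else 0))"
  define Y where "Y = (\<lambda>c a s n \<omega>. (1 / real n) * (\<Sum>i<n. if A n i \<omega> = a then f c a s (W i \<omega>) else 0))"
  have Wm[measurable]: "W i \<in> borel_measurable M" for i unfolding W_def by (rule W_meas)
  have indep: "indep_vars (\<lambda>_. borel) W UNIV" unfolding W_def by (rule W_indep)
  have ident: "distr M borel (W i) = distr M borel (W 0)" for i unfolding W_def by (rule W_ident)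
  have [measurable]: "Sf \<in> borel \<rightarrow>\<^sub>M count_space UNIV" by (rule Sf_meas)
  have ssm[measurable]: "(\<lambda>w::real \<times> real \<times> (real^'k). snd (snd w)) \<in> borel_measurable borel"
    by (intro borel_measurable_continuous_onI continuous_intros)
  have Swm[measurable]: "Sw \<in> borel \<rightarrow>\<^sub>M count_space UNIV" unfolding Sw_def by measurable
  have Sw_range: "Sw w \<in> {1..Sc}" for w unfolding Sw_def by (rule Sf_range)
  have [measurable]: "A n i \<in> M \<rightarrow>\<^sub>M count_space UNIV" for n i by (rule A_meas)
  have ci: "cond_indep_strata M n W (A n) (\<lambda>i \<omega>. Sw (W i \<omega>))" for n
    using cond_indep[of n] unfolding W_def Sw_def by simp
  have gm: "g a \<in> borel_measurable borel" if a: "a \<in> {0,1}" for a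
  proof -
    have hm[measurable]: "(\<lambda>(y, z). h y a z) \<in> borel_measurable borel" by (rule h_meas[OF a])
    have "g a = (\<lambda>(y, z). h y a z) \<circ> (\<lambda>w::real \<times> real \<times> (real^'k). (if a = 1 then fst (snd w) else fst w, snd (snd w)))"
      unfolding g_def by (auto simp: fun_eq_iff)
    also have "\<dots> \<in> borel_measurable borel"
    proof (rule measurable_comp[OF _ hm])
      show "(\<lambda>w::real \<times> real \<times> (real^'k). (if a = 1 then fst (snd w) else fst w, snd (snd w))) \<in> borel_measurable borel"
        by (cases "a = 1") (simp_all, (intro borel_measurable_continuous_onI continuous_intros)+)
    qed
    finally show ?thesis .
  qed
  have gint: "integrable M (\<lambda>\<omega>. g a (W 0 \<omega>))" if a: "a \<in> {0,1}" for a
    using h_int[OF a] unfolding g_def W_def fst_conv snd_conv .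
  have fm: "f c a s \<in> borel_measurable borel" if a: "a \<in> {0,1}" for c a s
  proof -
    have gam: "g a \<in> borel_measurable borel" by (rule gm[OF a])
    have vn: "(\<lambda>x::real^'j. x $ c) \<in> borel_measurable borel"
      by (intro borel_measurable_continuous_onI linear_continuous_on bounded_linear_vec_nth)
    have gc: "(\<lambda>w. g a w $ c) \<in> borel_measurable borel"
      using measurable_comp[OF gam vn] by (simp add: comp_def)
    have S: "{w \<in> space borel. Sw w = s} \<in> sets borel" by measurable
    show ?thesis unfolding f_def
      by (rule measurable_If_set[OF gc borel_measurable_const, of "{w. Sw w = s}", simplified])
  qed
  have fint: "integrable M (\<lambda>\<omega>. f c a s (W 0 \<omega>))" if a: "a \<in> {0,1}" for c a s
  proof (rule Bochner_Integration.integrable_bound[OF gint[OF a]])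
    show "(\<lambda>\<omega>. f c a s (W 0 \<omega>)) \<in> borel_measurable M"
      using measurable_comp[OF Wm fm[OF a]] by (simp add: comp_def)
    show "AE \<omega> in M. norm (f c a s (W 0 \<omega>)) \<le> norm (g a (W 0 \<omega>))"
      by (auto simp: f_def intro!: AE_I2 component_le_norm_cart)
  qed
  have p0m: "m c a s = 0" if "p s = 0" "a \<in> {0,1}" for c a s
  proof -
    have S: "{\<omega>\<in>space M. Sw (W 0 \<omega>) = s} \<in> sets M" by measurable
    have "{\<omega>\<in>space M. Sw (W 0 \<omega>) = s} \<in> null_sets M"
      using that S unfolding p_def by (auto simp: null_sets_def emeasure_eq_measure)
    then have "AE \<omega> in M. \<omega> \<notin> {\<omega>\<in>space M. Sw (W 0 \<omega>) = s}" by (rule AE_not_in)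
    with AE_space have "AE \<omega> in M. f c a s (W 0 \<omega>) = 0"
      by eventually_elim (auto simp: f_def)
    then have "m c a s = (\<integral>\<omega>. 0 \<partial>M)" unfolding m_def
      by (intro integral_cong_AE) (use measurable_comp[OF Wm fm[OF that(2)]] in \<open>auto simp: comp_def\<close>)
    then show ?thesis by simp
  qed
  have intind: "(\<integral>\<omega>. (if Sw (W 0 \<omega>) = s then 1 else 0::real) \<partial>M) = p s" for s
  proof -
    have "(\<integral>\<omega>. (if Sw (W 0 \<omega>) = s then 1 else 0::real) \<partial>M) = (\<integral>\<omega>. indicator {\<omega>\<in>space M. Sw (W 0 \<omega>) = s} \<omega> \<partial>M)"
      by (rule Bochner_Integration.integral_cong[OF refl]) (auto simp: indicator_def)
    also have "\<dots> = p s" unfolding p_def by (simp add: Int_absorb2 subset_iff)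
    finally show ?thesis .
  qed
  have ind_int: "integrable M (\<lambda>\<omega>. (if Sw (W 0 \<omega>) = s then 1 else 0::real))" for s
    by (rule integrable_const_bound[where B=1]) auto
  have um: "u c a s \<in> borel_measurable borel" if a: "a \<in> {0,1}" for c a s
  proof -
    have [measurable]: "f c a s \<in> borel_measurable borel" by (rule fm[OF a])
    show ?thesis unfolding u_def by measurable
  qed
  have uint: "integrable M (\<lambda>\<omega>. u c a s (W 0 \<omega>))" if a: "a \<in> {0,1}" for c a s
    unfolding u_def using fint[OF a] ind_int by auto
  have u0: "(\<integral>\<omega>. u c a s (W 0 \<omega>) \<partial>M) = 0" if a: "a \<in> {0,1}" for c a s
  proof -
    have "(\<integral>\<omega>. u c a s (W 0 \<omega>) \<partial>M) = m c a s - (m c a s / p s) * p s"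
      unfolding u_def using fint[OF a, of c s] ind_int[of s] intind[of s] by (simp add: m_def)
    then show ?thesis using p0m[OF _ a, of s c] by (cases "p s = 0") auto
  qed
  have usupp: "u c a s w \<noteq> 0 \<Longrightarrow> Sw w = s" for c a s w
    unfolding u_def f_def by (auto split: if_splits)
  have core_c: "conv_in_prob M (\<lambda>n \<omega>. (1 / real n) * (\<Sum>i<n. if A n i \<omega> = a then u c a s (W i \<omega>) else 0)) 0"
    if a: "a \<in> {0,1}" for c a s
    by (rule core[where M=M and W=W and Sw=Sw and u="u c a s" and A=A and Sc=Sc, OF M Wm indep ident Swm Sw_range A_meas A_bin ci um[OF a] uint[OF a] u0[OF a] usupp])
  have NS_card: "N_s Z Sf n s \<omega> = card {i. i < n \<and> Sw (W i \<omega>) = s}" for n s \<omega>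
    unfolding N_s_def W_def Sw_def by simp
  have NA_card: "N_as A Z Sf n a s \<omega> = card {i. i < n \<and> (A n i \<omega> = a \<and> Sw (W i \<omega>) = s)}" for n a s \<omega>
    unfolding N_as_def W_def Sw_def by simp
  have NSm: "(\<lambda>\<omega>. real (N_s Z Sf n s \<omega>)) \<in> borel_measurable M" for n s
    unfolding NS_card card_sum_real by measurable
  have NAm: "(\<lambda>\<omega>. real (N_as A Z Sf n a s \<omega>)) \<in> borel_measurable M" for n a s
    unfolding NA_card card_sum_real by measurable
  have freq: "conv_in_prob M (\<lambda>n \<omega>. real (N_s Z Sf n s \<omega>) / real n) (p s)" for s
    unfolding NS_card p_def by (rule freq_conv[OF M Wm indep ident Swm])
  have NA1_le: "N_as A Z Sf n 1 s \<omega> \<le> N_s Z Sf n s \<omega>" for n s \<omega>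
    unfolding NS_card NA_card by (rule card_mono) auto
  have NS_le: "N_s Z Sf n s \<omega> \<le> n" for n s \<omega>
  proof -
    have "card {i. i < n \<and> Sw (W i \<omega>) = s} \<le> card {..<n}" by (rule card_mono) auto
    then show ?thesis unfolding NS_card by simp
  qed
  have NA0: "N_as A Z Sf n 0 s \<omega> = N_s Z Sf n s \<omega> - N_as A Z Sf n 1 s \<omega>" for n s \<omega>
  proof -
    have "{i. i < n \<and> Sw (W i \<omega>) = s} = {i. i < n \<and> (A n i \<omega> = 1 \<and> Sw (W i \<omega>) = s)} \<union> {i. i < n \<and> (A n i \<omega> = 0 \<and> Sw (W i \<omega>) = s)}"
      using A_bin[of n _ \<omega>] by (auto, metis less_numeral_extra(3))
    then have "card {i. i < n \<and> Sw (W i \<omega>) = s} = card {i. i < n \<and> (A n i \<omega> = 1 \<and> Sw (W i \<omega>) = s)} + card {i. i < n \<and> (A n i \<omega> = 0 \<and> Sw (W i \<omega>) = s)}"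
      by (simp add: card_Un_disjoint disjoint_iff)
    then show ?thesis unfolding NS_card NA_card by simp
  qed
  have NAconv: "conv_in_prob M (\<lambda>n \<omega>. real (N_as A Z Sf n a s \<omega>) / real n) (pia a s * p s)"
    if a: "a \<in> {0,1}" and s: "s \<in> {1..Sc}" for a s
  proof -
    have pib: "\<bar>\<pi> s\<bar> \<le> 1" using \<pi>_range[OF s] by auto
    note pc = prod_conv[OF M NAm NSm NA1_le NS_le balance[OF s] freq pib]
    show ?thesis
    proof (cases "a = 1")
      case True then show ?thesis using pc(1) by (simp add: pia_def)
    next
      case False then have "a = 0" using a by auto
      then show ?thesis using pc(2) by (simp add: pia_def NA0)
    qed
  qed
  have Yconv: "conv_in_prob M (Y c a s) (pia a s * m c a s)"
    if a: "a \<in> {0,1}" and s: "s \<in> {1..Sc}" for c a s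
  proof -
    define U where "U = (\<lambda>k::nat. if k = 0 then (\<lambda>n \<omega>. (1 / real n) * (\<Sum>i<n. if A n i \<omega> = a then u c a s (W i \<omega>) else 0))
                                 else (\<lambda>n \<omega>. real (N_as A Z Sf n a s \<omega>) / real n))"
    define cc where "cc = (\<lambda>k::nat. if k = 0 then 0 else pia a s * p s)"
    have [measurable]: "u c a s \<in> borel_measurable borel" by (rule um[OF a])
    have Uc: "conv_in_prob M (U k) (cc k)" if "k \<in> {0,1}" for k
      using that core_c[OF a, of c s] NAconv[OF a s] by (auto simp: U_def cc_def)
    have Um: "(\<lambda>\<omega>. dist (U k n \<omega>) (cc k)) \<in> borel_measurable M" if "k \<in> {0,1}" for k n
      using that NAm[of n a s] unfolding U_def cc_def by auto
    show ?thesis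
    proof (rule conv_in_prob_sum_bound[OF M, where K="{0,1}" and U=U and c=cc and C="1 + \<bar>m c a s / p s\<bar>"])
      show "dist (Y c a s n \<omega>) (pia a s * m c a s) \<le> (1 + \<bar>m c a s / p s\<bar>) * (\<Sum>k\<in>{0,1}. dist (U k n \<omega>) (cc k))"
        if n: "n > 0" for n \<omega>
      proof -
        define q where "q = m c a s / p s"
        define core where "core = (1 / real n) * (\<Sum>i<n. if A n i \<omega> = a then u c a s (W i \<omega>) else 0)"
        define fr where "fr = real (N_as A Z Sf n a s \<omega>) / real n"
        have "(\<Sum>i<n. if A n i \<omega> = a then f c a s (W i \<omega>) else 0)
            = (\<Sum>i<n. (if A n i \<omega> = a then u c a s (W i \<omega>) else 0) + q * (if A n i \<omega> = a \<and> Sw (W i \<omega>) = s then 1 else 0))"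
          by (rule sum.cong) (auto simp: u_def q_def)
        also have "\<dots> = (\<Sum>i<n. if A n i \<omega> = a then u c a s (W i \<omega>) else 0) + q * real (N_as A Z Sf n a s \<omega>)"
          by (simp add: sum.distrib sum_distrib_left[symmetric] NA_card card_sum_real)
        finally have Yeq: "Y c a s n \<omega> = core + q * fr"
          unfolding Y_def core_def fr_def by (simp add: distrib_left)
        have pm: "pia a s * m c a s = q * (pia a s * p s)"
          using p0m[OF _ a, of s c] unfolding q_def by (cases "p s = 0") auto
        have "\<bar>Y c a s n \<omega> - pia a s * m c a s\<bar> = \<bar>core + q * (fr - pia a s * p s)\<bar>"
          unfolding Yeq pm by (simp add: algebra_simps)
        also have "\<dots> \<le> \<bar>core\<bar> + \<bar>q\<bar> * \<bar>fr - pia a s * p s\<bar>"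
          by (metis abs_mult abs_triangle_ineq)
        also have "\<dots> \<le> (1 + \<bar>q\<bar>) * (\<bar>core\<bar> + \<bar>fr - pia a s * p s\<bar>)"
          by (simp add: algebra_simps)
        finally have le: "\<bar>Y c a s n \<omega> - pia a s * m c a s\<bar> \<le> (1 + \<bar>q\<bar>) * (\<bar>core\<bar> + \<bar>fr - pia a s * p s\<bar>)" .
        have sumeq: "(\<Sum>k\<in>{0,1}. dist (U k n \<omega>) (cc k)) = \<bar>core\<bar> + \<bar>fr - pia a s * p s\<bar>"
          by (simp add: U_def cc_def core_def fr_def dist_real_def)
        show ?thesis unfolding sumeq using le by (simp add: dist_real_def q_def)
      qed
    qed (use Uc Um in auto)
  qed
  define G where "G = (\<lambda>a s \<omega>. if Sw (W 0 \<omega>) = s then g a (W 0 \<omega>) else 0)"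
  have Gint: "integrable M (G a s)" if a: "a \<in> {0,1}" for a s
  proof (rule Bochner_Integration.integrable_bound[OF gint[OF a]])
    have [measurable]: "g a \<in> borel_measurable borel" by (rule gm[OF a])
    show "G a s \<in> borel_measurable M" unfolding G_def by measurable
    show "AE \<omega> in M. norm (G a s \<omega>) \<le> norm (g a (W 0 \<omega>))" by (auto simp: G_def)
  qed
  have hc: "h (Y1 i \<omega> * real (A n i \<omega>) + Y0 i \<omega> * (1 - real (A n i \<omega>))) (A n i \<omega>) (Z i \<omega>) $ c
      = (\<Sum>a\<in>{0,1}. \<Sum>s\<in>{1..Sc}. if A n i \<omega> = a then f c a s (W i \<omega>) else 0)" for n i \<omega> c
  proof -
    have d: "(\<Sum>s\<in>{1..Sc}. f c a s (W i \<omega>)) = g a (W i \<omega>) $ c" for a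
      unfolding f_def using Sw_range[of "W i \<omega>"] by (simp add: sum.delta)
    show ?thesis
    proof (cases "A n i \<omega> = 1")
      case True
      then show ?thesis using d[of 1] by (simp add: g_def W_def)
    next
      case False
      then have "A n i \<omega> = 0" using A_bin[of n i \<omega>] by auto
      then show ?thesis using d[of 0] by (simp add: g_def W_def)
    qed
  qed
  have Xc: "((1 / real n) *\<^sub>R (\<Sum>i<n. h (Y1 i \<omega> * real (A n i \<omega>) + Y0 i \<omega> * (1 - real (A n i \<omega>))) (A n i \<omega>) (Z i \<omega>))) $ c
      = (\<Sum>a\<in>{0,1}. \<Sum>s\<in>{1..Sc}. Y c a s n \<omega>)" for n \<omega> c
  proof -
    have "((1 / real n) *\<^sub>R (\<Sum>i<n. h (Y1 i \<omega> * real (A n i \<omega>) + Y0 i \<omega> * (1 - real (A n i \<omega>))) (A n i \<omega>) (Z i \<omega>))) $ c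
        = (1 / real n) * (\<Sum>i<n. \<Sum>a\<in>{0,1}. \<Sum>s\<in>{1..Sc}. if A n i \<omega> = a then f c a s (W i \<omega>) else 0)"
      by (simp add: hc)
    also have "\<dots> = (\<Sum>i<n. \<Sum>a\<in>{0,1}. \<Sum>s\<in>{1..Sc}. (1 / real n) * (if A n i \<omega> = a then f c a s (W i \<omega>) else 0))"
      by (simp only: sum_distrib_left)
    also have "\<dots> = (\<Sum>a\<in>{0,1}. \<Sum>i<n. \<Sum>s\<in>{1..Sc}. (1 / real n) * (if A n i \<omega> = a then f c a s (W i \<omega>) else 0))"
      by (rule sum.swap)
    also have "\<dots> = (\<Sum>a\<in>{0,1}. \<Sum>s\<in>{1..Sc}. \<Sum>i<n. (1 / real n) * (if A n i \<omega> = a then f c a s (W i \<omega>) else 0))"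
      by (rule sum.cong[OF refl], rule sum.swap)
    also have "\<dots> = (\<Sum>a\<in>{0,1}. \<Sum>s\<in>{1..Sc}. (1 / real n) * (\<Sum>i<n. if A n i \<omega> = a then f c a s (W i \<omega>) else 0))"
      by (simp only: sum_distrib_left)
    finally show ?thesis by (simp add: Y_def)
  qed
  define T where "T = integral\<^sup>L M (\<lambda>\<omega>. \<pi> (Sf (Z 0 \<omega>)) *\<^sub>R h (Y1 0 \<omega>) 1 (Z 0 \<omega>)
                             + (1 - \<pi> (Sf (Z 0 \<omega>))) *\<^sub>R h (Y0 0 \<omega>) 0 (Z 0 \<omega>))"
  have Tc: "T $ c = (\<Sum>a\<in>{0,1}. \<Sum>s\<in>{1..Sc}. pia a s * m c a s)" for c
  proof -
    have pw: "\<pi> (Sf (Z 0 \<omega>)) *\<^sub>R h (Y1 0 \<omega>) 1 (Z 0 \<omega>) + (1 - \<pi> (Sf (Z 0 \<omega>))) *\<^sub>R h (Y0 0 \<omega>) 0 (Z 0 \<omega>)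
        = (\<Sum>a\<in>{0,1}. \<Sum>s\<in>{1..Sc}. pia a s *\<^sub>R G a s \<omega>)" for \<omega>
    proof -
      have d: "(\<Sum>s\<in>{1..Sc}. pia a s *\<^sub>R G a s \<omega>) = pia a (Sw (W 0 \<omega>)) *\<^sub>R g a (W 0 \<omega>)" for a
        unfolding G_def using Sw_range[of "W 0 \<omega>"] by (simp add: if_distrib sum.delta cong: if_cong)
      show ?thesis unfolding d by (simp add: pia_def g_def W_def Sw_def)
    qed
    have "T = (\<Sum>a\<in>{0,1}. \<Sum>s\<in>{1..Sc}. pia a s *\<^sub>R integral\<^sup>L M (G a s))"
      unfolding T_def pw using Gint by (simp add: Bochner_Integration.integral_sum)
    then have "T $ c = (\<Sum>a\<in>{0,1}. \<Sum>s\<in>{1..Sc}. pia a s * (integral\<^sup>L M (G a s) $ c))" by simp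
    also have "\<dots> = (\<Sum>a\<in>{0,1}. \<Sum>s\<in>{1..Sc}. pia a s * m c a s)"
    proof -
      have comp: "integral\<^sup>L M (G a s) $ c = m c a s" if a: "(a::nat) \<in> {0,1}" for a s
      proof -
        have "integral\<^sup>L M (G a s) $ c = (\<integral>\<omega>. G a s \<omega> $ c \<partial>M)"
          by (rule integral_bounded_linear[OF bounded_linear_vec_nth Gint[OF a], symmetric])
        also have "\<dots> = m c a s" unfolding m_def f_def G_def by (rule Bochner_Integration.integral_cong[OF refl]) auto
        finally show ?thesis .
      qed
      show ?thesis using comp by simp
    qed
    finally show ?thesis .
  qed
  show ?thesis
    unfolding T_def[symmetric]
  proof (rule conv_in_prob_sum_bound[OF M, where K="UNIV \<times> ({0,1} \<times> {1..Sc})"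
        and U="\<lambda>k. Y (fst k) (fst (snd k)) (snd (snd k))"
        and c="\<lambda>k. pia (fst (snd k)) (snd (snd k)) * m (fst k) (fst (snd k)) (snd (snd k))" and C=1])
    show "finite ((UNIV::'j set) \<times> ({0::nat,1} \<times> {1..Sc}))" by simp
    show "conv_in_prob M (Y (fst k) (fst (snd k)) (snd (snd k))) (pia (fst (snd k)) (snd (snd k)) * m (fst k) (fst (snd k)) (snd (snd k)))"
      if "k \<in> UNIV \<times> ({0,1} \<times> {1..Sc})" for k
      using that Yconv by auto
    show "(\<lambda>\<omega>. dist (Y (fst k) (fst (snd k)) (snd (snd k)) n \<omega>) (pia (fst (snd k)) (snd (snd k)) * m (fst k) (fst (snd k)) (snd (snd k)))) \<in> borel_measurable M"
      if "k \<in> UNIV \<times> ({0,1} \<times> {1..Sc})" for k n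
    proof -
      have a: "fst (snd k) \<in> {0,1}" using that by auto
      have [measurable]: "f (fst k) (fst (snd k)) (snd (snd k)) \<in> borel_measurable borel" by (rule fm[OF a])
      show ?thesis unfolding Y_def by measurable
    qed
    show "dist ((1 / real n) *\<^sub>R (\<Sum>i<n. h (Y1 i \<omega> * real (A n i \<omega>) + Y0 i \<omega> * (1 - real (A n i \<omega>))) (A n i \<omega>) (Z i \<omega>))) T
        \<le> 1 * (\<Sum>k\<in>UNIV \<times> ({0,1} \<times> {1..Sc}). dist (Y (fst k) (fst (snd k)) (snd (snd k)) n \<omega>) (pia (fst (snd k)) (snd (snd k)) * m (fst k) (fst (snd k)) (snd (snd k))))"
      for n \<omega>
    proof -
      define X where "X = (1 / real n) *\<^sub>R (\<Sum>i<n. h (Y1 i \<omega> * real (A n i \<omega>) + Y0 i \<omega> * (1 - real (A n i \<omega>))) (A n i \<omega>) (Z i \<omega>))"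
      have "dist X T = norm (X - T)" by (simp add: dist_norm)
      also have "\<dots> \<le> (\<Sum>c\<in>UNIV. \<bar>(X - T) $ c\<bar>)" by (rule norm_le_l1_cart)
      also have "\<dots> \<le> (\<Sum>c\<in>UNIV. \<Sum>a\<in>{0,1}. \<Sum>s\<in>{1..Sc}. \<bar>Y c a s n \<omega> - pia a s * m c a s\<bar>)"
      proof (rule sum_mono)
        fix c
        have "(X - T) $ c = (\<Sum>a\<in>{0,1}. \<Sum>s\<in>{1..Sc}. Y c a s n \<omega> - pia a s * m c a s)"
          unfolding X_def vector_minus_component Xc Tc by (simp add: sum_subtractf)
        also have "\<bar>\<dots>\<bar> \<le> (\<Sum>a\<in>{0,1}. \<bar>\<Sum>s\<in>{1..Sc}. Y c a s n \<omega> - pia a s * m c a s\<bar>)"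
          by (rule sum_abs)
        also have "\<dots> \<le> (\<Sum>a\<in>{0,1}. \<Sum>s\<in>{1..Sc}. \<bar>Y c a s n \<omega> - pia a s * m c a s\<bar>)"
          by (rule sum_mono) (rule sum_abs)
        finally show "\<bar>(X - T) $ c\<bar> \<le> (\<Sum>a\<in>{0,1}. \<Sum>s\<in>{1..Sc}. \<bar>Y c a s n \<omega> - pia a s * m c a s\<bar>)"
          by simp
      qed
      also have "\<dots> = (\<Sum>k\<in>UNIV \<times> ({0,1} \<times> {1..Sc}). dist (Y (fst k) (fst (snd k)) (snd (snd k)) n \<omega>) (pia (fst (snd k)) (snd (snd k)) * m (fst k) (fst (snd k)) (snd (snd k))))"
        by (simp add: sum.cartesian_product dist_real_def case_prod_beta)
      finally show ?thesis unfolding X_def by simp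
    qed
  qed simp
qed

end
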